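(* In the setting of the context, fix $\alpha>0$ and suppose the spectral radius of $\mathcal{H}_{22}$ satisfies $\sigma(\mathcal{H}_{22})<1$. Then $I-\mathcal{H}_{11}$ and $I-\mathcal{H}_{22}$ are invertible and, as $k\to\infty$, $$q^k\to q^\infty:=(I-\mathcal{H}_{11})^{-1}u_q^\infty,\qquad \hat{\mathbf Q}^k\to\hat{\mathbf Q}^\infty:=(I_{nn_\xi^2}-\mathcal{H}_{22})^{-1}(\mathcal{H}_{21}q^\infty+u_Q^\infty),$$ $$\delta^k\to\delta^\infty:=C_\delta(I_{nn_\xi^2}-\mathcal{H}_{22})^{-1}(\mathcal{H}_{21}q^\infty+u_Q^\infty),$$ where $u_q^\infty$ and $u_Q^\infty$ are defined as $u_q^k,u_Q^k$ with $p_i^k$ replaced by $p_i^\infty$.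
   Context: Setting. $\mathcal{S}$ is a finite set; $\{s^k\}_{k\ge0}$ is a Markov chain on $\mathcal{S}$ that is irreducible and aperiodic. A feature map $\phi:\mathcal{S}\to\mathbb{R}^p$ is given, with linearly independent feature vectors $\{\phi(s)\}_{s\in\mathcal{S}}$. $\gamma\in(0,1)$. There are $M$ agents with rewards $R_m:\mathcal{S}\times\mathcal{S}\to\mathbb{R}$. $W\in\mathbb{R}^{M\times M}$ is doubly stochastic with entries in $[0,1]$ whose off-diagonal sparsity pattern is that of a connected undirected graph. Decentralized TD(0) with learning rate $\alpha>0$ and deterministic initial weights: $\theta_m^{k+1}=\sum_{m'}W_{mm'}\theta_{m'}^k+\alpha\phi(s^k)[(\gamma\phi(s^{k+1})-\phi(s^k))^\top\theta_m^k+R_m(s^k,s^{k+1})]$. Let $n=|\mathcal{S}|^2$, identify pairs $(s,s')$ with $\mathcal{N}=\{1,\dots,n\}$, and let $z^k$ be the index of $(s^k,s^{k+1})$; $\{z^k\}$ is a Markov chain with $p_{ij}=\mathbb{P}(z^{k+1}=j\mid z^k=i)$, $p_i^k=\mathbb{P}(z^k=i)$, $p_i^\infty=\lim_k p_i^k$. For $i\leftrightarrow(s,s')$: $A_i=\phi(s)(\gamma\phi(s')-\phi(s))^\top$, $b_{m,i}=R_m(s,s')\phi(s)$, $B_i=[b_{1,i}\cdots b_{M,i}]$. $\bar A=\sum_ip_i^\infty A_i$ (Hurwitz), $\bar{\mathbf b}=\frac1M\sum_m\sum_ip_i^\infty b_{m,i}$, $\theta^*$ the unique solution of $\bar A\theta^*+\bar{\mathbf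 b}=0$, $\Theta^*=[\theta^*\cdots\theta^*]\in\mathbb{R}^{p\times M}$. $n_\xi=Mp$, $\xi^k=\mathrm{vec}([\theta_1^k-\theta^*\cdots\theta_M^k-\theta^*])$, $\delta^k=\frac1M\mathbb{E}\|\xi^k\|^2$. $H_i=\alpha I_M\otimes A_i+W\otimes I_p$, $G_i=\alpha\,\mathrm{vec}(B_i+A_i\Theta^* )$. $q^k$ stacks $q_i^k=\mathbb{E}[\xi^k\mathbf 1_{\{z^k=i\}}]$; $\hat{\mathbf Q}^k$ stacks $\mathrm{vec}(Q_i^k)$, $Q_i^k=\mathbb{E}[\xi^k(\xi^k)^\top\mathbf 1_{\{z^k=i\}}]$. $\mathcal{H}_{11}$, $\mathcal{H}_{22}$, $\mathcal{H}_{21}$ are $n\times n$ block matrices with $(j,i)$ blocks $p_{ij}H_i$, $p_{ij}H_i\otimes H_i$, $p_{ij}(H_i\otimes G_i+G_i\otimes H_i)$ respectively. The $j$-th block of $u_q^k$ is $\sum_ip_{ij}p_i^kG_i$ and of $u_Q^k$ is $\sum_ip_{ij}p_i^kG_i\otimes G_i$. $C_\delta=\frac1M(\mathbf 1_n^\top\otimes\mathrm{vec}(I_{n_\xi})^\top)$. *)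

theory Defs
  imports "Jordan_Normal_Form.Spectral_Radius" "HOL-Library.FuncSet"
begin

text \<open>States are S = {0..<N}; features phi s j (j<p) are the coordinates of phi(s) in R^p;
  agents are m<M; rewards R m s s'; W m m' is the mixing matrix; P s s' is the transition
  matrix of the state chain and mu0 its initial distribution; theta0 m j are the
  deterministic initial weights.\<close>

record td_sys =
  nst :: nat
  P :: "nat \<Rightarrow> nat \<Rightarrow> real"
  mu0 :: "nat \<Rightarrow> real"
  p :: nat
  phi :: "nat \<Rightarrow> nat \<Rightarrow> real"
  gam :: real
  M :: nat
  R :: "nat \<Rightarrow> nat \<Rightarrow> nat \<Rightarrow> real"
  W :: "nat \<Rightarrow> nat \<Rightarrow> real"
  alpha :: real
  theta0 :: "nat \<Rightarrow> nat \<Rightarrow> real"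

definition stochastic_matrix :: "nat \<Rightarrow> (nat \<Rightarrow> nat \<Rightarrow> real) \<Rightarrow> bool" where
  "stochastic_matrix N Q \<longleftrightarrow> (\<forall>i<N. \<forall>j<N. 0 \<le> Q i j) \<and> (\<forall>i<N. (\<Sum>j<N. Q i j) = 1)"

definition prob_vector :: "nat \<Rightarrow> (nat \<Rightarrow> real) \<Rightarrow> bool" where
  "prob_vector N mu \<longleftrightarrow> (\<forall>i<N. 0 \<le> mu i) \<and> (\<Sum>i<N. mu i) = 1"

fun mstep :: "nat \<Rightarrow> (nat \<Rightarrow> nat \<Rightarrow> real) \<Rightarrow> nat \<Rightarrow> nat \<Rightarrow> nat \<Rightarrow> real" where
  "mstep N Q 0 i j = (if i = j then 1 else 0)"
| "mstep N Q (Suc k) i j = (\<Sum>l<N. mstep N Q k i l * Q l j)"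

definition irreducible_chain :: "nat \<Rightarrow> (nat \<Rightarrow> nat \<Rightarrow> real) \<Rightarrow> bool" where
  "irreducible_chain N Q \<longleftrightarrow> (\<forall>i<N. \<forall>j<N. \<exists>k. 0 < mstep N Q k i j)"

definition aperiodic_chain :: "nat \<Rightarrow> (nat \<Rightarrow> nat \<Rightarrow> real) \<Rightarrow> bool" where
  "aperiodic_chain N Q \<longleftrightarrow> (\<forall>i<N. Gcd {k. 0 < k \<and> 0 < mstep N Q k i i} = (1::nat))"

definition doubly_stochastic01 :: "nat \<Rightarrow> (nat \<Rightarrow> nat \<Rightarrow> real) \<Rightarrow> bool" where
  "doubly_stochastic01 n A \<longleftrightarrow> (\<forall>i<n. \<forall>j<n. 0 \<le> A i j \<and> A i j \<le> 1)
     \<and> (\<forall>i<n. (\<Sum>j<n. A i j) = 1) \<and> (\<forall>j<n. (\<Sum>i<n. A i j) = 1)"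

definition connected_pattern :: "nat \<Rightarrow> (nat \<Rightarrow> nat \<Rightarrow> real) \<Rightarrow> bool" where
  "connected_pattern n A \<longleftrightarrow>
     (\<forall>i<n. \<forall>j<n. i \<noteq> j \<longrightarrow> (A i j \<noteq> 0 \<longleftrightarrow> A j i \<noteq> 0)) \<and>
     (\<forall>i<n. \<forall>j<n. (\<lambda>a b. a < n \<and> b < n \<and> a \<noteq> b \<and> A a b \<noteq> 0)\<^sup>*\<^sup>* i j)"

definition lin_indep_features :: "nat \<Rightarrow> nat \<Rightarrow> (nat \<Rightarrow> nat \<Rightarrow> real) \<Rightarrow> bool" where
  "lin_indep_features N d f \<longleftrightarrow>
     (\<forall>c::nat \<Rightarrow> real. (\<forall>j<d. (\<Sum>s<N. c s * f s j) = 0) \<longrightarrow> (\<forall>s<N. c s = 0))"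

definition paths :: "nat \<Rightarrow> nat \<Rightarrow> (nat \<Rightarrow> nat) set" where
  "paths N K = {0..K} \<rightarrow>\<^sub>E {0..<N}"

definition path_prob :: "td_sys \<Rightarrow> nat \<Rightarrow> (nat \<Rightarrow> nat) \<Rightarrow> real" where
  "path_prob S K \<omega> = mu0 S (\<omega> 0) * (\<Prod>j<K. P S (\<omega> j) (\<omega> (Suc j)))"

definition pexp :: "td_sys \<Rightarrow> nat \<Rightarrow> ((nat \<Rightarrow> nat) \<Rightarrow> real) \<Rightarrow> real" where
  "pexp S K f = (\<Sum>\<omega>\<in>paths (nst S) K. path_prob S K \<omega> * f \<omega>)"

definition nz :: "td_sys \<Rightarrow> nat" where "nz S = nst S * nst S"
definition nxi :: "td_sys \<Rightarrow> nat" where "nxi S = M S * p S"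

definition zidx :: "td_sys \<Rightarrow> nat \<Rightarrow> nat \<Rightarrow> nat" where "zidx S s s' = s * nst S + s'"
definition zfst :: "td_sys \<Rightarrow> nat \<Rightarrow> nat" where "zfst S i = i div nst S"
definition zsnd :: "td_sys \<Rightarrow> nat \<Rightarrow> nat" where "zsnd S i = i mod nst S"

definition zP :: "td_sys \<Rightarrow> nat \<Rightarrow> nat \<Rightarrow> real" where
  "zP S i j = (if zsnd S i = zfst S j then P S (zfst S j) (zsnd S j) else 0)"

definition zind :: "td_sys \<Rightarrow> nat \<Rightarrow> nat \<Rightarrow> (nat \<Rightarrow> nat) \<Rightarrow> real" where
  "zind S k i \<omega> = (if zidx S (\<omega> k) (\<omega> (Suc k)) = i then 1 else 0)"

definition pk :: "td_sys \<Rightarrow> nat \<Rightarrow> nat \<Rightarrow> real" where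
  "pk S k i = pexp S (Suc k) (zind S k i)"

definition pinf :: "td_sys \<Rightarrow> nat \<Rightarrow> real" where
  "pinf S i = lim (\<lambda>k. pk S k i)"

definition Amat :: "td_sys \<Rightarrow> nat \<Rightarrow> real mat" where
  "Amat S i = mat (p S) (p S) (\<lambda>(a,b). phi S (zfst S i) a *
      (gam S * phi S (zsnd S i) b - phi S (zfst S i) b))"

definition bvec :: "td_sys \<Rightarrow> nat \<Rightarrow> nat \<Rightarrow> real vec" where
  "bvec S m i = vec (p S) (\<lambda>a. R S m (zfst S i) (zsnd S i) * phi S (zfst S i) a)"

definition Bmat :: "td_sys \<Rightarrow> nat \<Rightarrow> real mat" where
  "Bmat S i = mat (p S) (M S) (\<lambda>(a,m). bvec S m i $ a)"

definition Abar :: "td_sys \<Rightarrow> real mat" where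
  "Abar S = mat (p S) (p S) (\<lambda>(a,b). \<Sum>i<nz S. pinf S i * Amat S i $$ (a,b))"

definition bbar :: "td_sys \<Rightarrow> real vec" where
  "bbar S = vec (p S) (\<lambda>a. (1 / real (M S)) * (\<Sum>m<M S. \<Sum>i<nz S. pinf S i * bvec S m i $ a))"

definition thstar :: "td_sys \<Rightarrow> real vec" where
  "thstar S = (THE th. th \<in> carrier_vec (p S) \<and> Abar S *\<^sub>v th + bbar S = 0\<^sub>v (p S))"

definition Thstar :: "td_sys \<Rightarrow> real mat" where
  "Thstar S = mat (p S) (M S) (\<lambda>(a,m). thstar S $ a)"

fun theta :: "td_sys \<Rightarrow> nat \<Rightarrow> (nat \<Rightarrow> nat) \<Rightarrow> nat \<Rightarrow> nat \<Rightarrow> real" where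
  "theta S 0 \<omega> m j = theta0 S m j"
| "theta S (Suc k) \<omega> m j =
     (\<Sum>m'<M S. W S m m' * theta S k \<omega> m' j)
     + alpha S * phi S (\<omega> k) j *
       ((\<Sum>l<p S. (gam S * phi S (\<omega> (Suc k)) l - phi S (\<omega> k) l) * theta S k \<omega> m l)
        + R S m (\<omega> k) (\<omega> (Suc k)))"

text \<open>xi^k = vec([theta_1^k - theta*, ..., theta_M^k - theta*]) (column stacking)\<close>
definition xi :: "td_sys \<Rightarrow> nat \<Rightarrow> (nat \<Rightarrow> nat) \<Rightarrow> real vec" where
  "xi S k \<omega> = vec (nxi S) (\<lambda>r. theta S k \<omega> (r div p S) (r mod p S) - thstar S $ (r mod p S))"

definition delta :: "td_sys \<Rightarrow> nat \<Rightarrow> real" where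
  "delta S k = (1 / real (M S)) * pexp S k (\<lambda>\<omega>. \<Sum>r<nxi S. (xi S k \<omega> $ r)\<^sup>2)"

text \<open>q^k stacks q_i^k = E[xi^k 1{z^k=i}]\<close>
definition qv :: "td_sys \<Rightarrow> nat \<Rightarrow> real vec" where
  "qv S k = vec (nz S * nxi S) (\<lambda>r.
     pexp S (Suc k) (\<lambda>\<omega>. xi S k \<omega> $ (r mod nxi S) * zind S k (r div nxi S) \<omega>))"

text \<open>Qhat^k stacks vec(Q_i^k), Q_i^k = E[xi^k xi^k^T 1{z^k=i}]\<close>
definition Qv :: "td_sys \<Rightarrow> nat \<Rightarrow> real vec" where
  "Qv S k = vec (nz S * (nxi S)\<^sup>2) (\<lambda>r.
     pexp S (Suc k) (\<lambda>\<omega>. xi S k \<omega> $ ((r mod (nxi S)\<^sup>2) mod nxi S)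
                        * xi S k \<omega> $ ((r mod (nxi S)\<^sup>2) div nxi S)
                        * zind S k (r div (nxi S)\<^sup>2) \<omega>))"

definition kron :: "real mat \<Rightarrow> real mat \<Rightarrow> real mat" where
  "kron A B = mat (dim_row A * dim_row B) (dim_col A * dim_col B)
     (\<lambda>(i,j). A $$ (i div dim_row B, j div dim_col B) * B $$ (i mod dim_row B, j mod dim_col B))"

text \<open>column-stacking vectorization\<close>
definition vecm :: "real mat \<Rightarrow> real vec" where
  "vecm X = vec (dim_row X * dim_col X) (\<lambda>r. X $$ (r mod dim_row X, r div dim_row X))"

definition col_mat :: "real vec \<Rightarrow> real mat" where
  "col_mat v = mat (dim_vec v) 1 (\<lambda>(i,j). v $ i)"

definition block_mat :: "nat \<Rightarrow> nat \<Rightarrow> nat \<Rightarrow> (nat \<Rightarrow> nat \<Rightarrow> real mat) \<Rightarrow> real mat" where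
  "block_mat n d1 d2 F = mat (n * d1) (n * d2)
     (\<lambda>(r,c). F (r div d1) (c div d2) $$ (r mod d1, c mod d2))"

definition block_vec :: "nat \<Rightarrow> nat \<Rightarrow> (nat \<Rightarrow> real vec) \<Rightarrow> real vec" where
  "block_vec n d F = vec (n * d) (\<lambda>r. F (r div d) $ (r mod d))"

definition minv :: "real mat \<Rightarrow> real mat" where
  "minv A = (SOME B. B \<in> carrier_mat (dim_row A) (dim_row A) \<and> inverts_mat A B \<and> inverts_mat B A)"

definition vec_tendsto :: "(nat \<Rightarrow> real vec) \<Rightarrow> real vec \<Rightarrow> bool" where
  "vec_tendsto f L \<longleftrightarrow> (\<forall>k. dim_vec (f k) = dim_vec L) \<and>
      (\<forall>r<dim_vec L. (\<lambda>k. f k $ r) \<longlonglongrightarrow> L $ r)"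

definition Wmat :: "td_sys \<Rightarrow> real mat" where
  "Wmat S = mat (M S) (M S) (\<lambda>(a,b). W S a b)"

definition Hmat :: "td_sys \<Rightarrow> nat \<Rightarrow> real mat" where
  "Hmat S i = alpha S \<cdot>\<^sub>m kron (1\<^sub>m (M S)) (Amat S i) + kron (Wmat S) (1\<^sub>m (p S))"

definition Gvec :: "td_sys \<Rightarrow> nat \<Rightarrow> real vec" where
  "Gvec S i = alpha S \<cdot>\<^sub>v vecm (Bmat S i + Amat S i * Thstar S)"

definition H11 :: "td_sys \<Rightarrow> real mat" where
  "H11 S = block_mat (nz S) (nxi S) (nxi S) (\<lambda>j i. zP S i j \<cdot>\<^sub>m Hmat S i)"

definition H22 :: "td_sys \<Rightarrow> real mat" where
  "H22 S = block_mat (nz S) ((nxi S)\<^sup>2) ((nxi S)\<^sup>2)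
     (\<lambda>j i. zP S i j \<cdot>\<^sub>m kron (Hmat S i) (Hmat S i))"

definition H21 :: "td_sys \<Rightarrow> real mat" where
  "H21 S = block_mat (nz S) ((nxi S)\<^sup>2) (nxi S)
     (\<lambda>j i. zP S i j \<cdot>\<^sub>m (kron (Hmat S i) (col_mat (Gvec S i)) + kron (col_mat (Gvec S i)) (Hmat S i)))"

definition uq_inf :: "td_sys \<Rightarrow> real vec" where
  "uq_inf S = block_vec (nz S) (nxi S)
     (\<lambda>j. vec (nxi S) (\<lambda>r. \<Sum>i<nz S. zP S i j * pinf S i * Gvec S i $ r))"

definition uQ_inf :: "td_sys \<Rightarrow> real vec" where
  "uQ_inf S = block_vec (nz S) ((nxi S)\<^sup>2)
     (\<lambda>j. vec ((nxi S)\<^sup>2) (\<lambda>r. \<Sum>i<nz S. zP S i j * pinf S i *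
        kron (col_mat (Gvec S i)) (col_mat (Gvec S i)) $$ (r, 0)))"

definition Cdelta :: "td_sys \<Rightarrow> real mat" where
  "Cdelta S = (1 / real (M S)) \<cdot>\<^sub>m
     kron (mat 1 (nz S) (\<lambda>_. 1)) (transpose_mat (col_mat (vecm (1\<^sub>m (nxi S)))))"

definition q_inf :: "td_sys \<Rightarrow> real vec" where
  "q_inf S = minv (1\<^sub>m (nz S * nxi S) - H11 S) *\<^sub>v uq_inf S"

definition Q_inf :: "td_sys \<Rightarrow> real vec" where
  "Q_inf S = minv (1\<^sub>m (nz S * (nxi S)\<^sup>2) - H22 S) *\<^sub>v (H21 S *\<^sub>v q_inf S + uQ_inf S)"

definition delta_inf :: "td_sys \<Rightarrow> real" where
  "delta_inf S = (Cdelta S *\<^sub>v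
     (minv (1\<^sub>m (nz S * (nxi S)\<^sup>2) - H22 S) *\<^sub>v (H21 S *\<^sub>v q_inf S + uQ_inf S))) $ 0"

end

theory Submission
  imports Defs
begin

definition nrm1 :: "real vec \<Rightarrow> real" where
  "nrm1 v = (\<Sum>i<dim_vec v. \<bar>v$i\<bar>)"

definition msum :: "real mat \<Rightarrow> real" where
  "msum A = (\<Sum>i<dim_row A. \<Sum>j<dim_col A. \<bar>A$$(i,j)\<bar>)"

lemma mult_mat_vec_index_sum:
  assumes "A \<in> carrier_mat n m" "v \<in> carrier_vec m" "i < n"
  shows "(A *\<^sub>v v) $ i = (\<Sum>j<m. A $$ (i,j) * v $ j)"
proof -
  have "(A *\<^sub>v v) $ i = row A i \<bullet> v" using assms by simp
  also have "\<dots> = (\<Sum>j\<in>{0..<m}. row A i $ j * v $ j)" using assms unfolding scalar_prod_def by simp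
  also have "\<dots> = (\<Sum>j<m. A $$ (i,j) * v $ j)" using assms by (intro sum.cong) auto
  finally show ?thesis .
qed
lemma nrm1_ge0: "0 \<le> nrm1 v" unfolding nrm1_def by (auto intro: sum_nonneg)

lemma msum_ge0: "0 \<le> msum v" unfolding msum_def by (auto intro!: sum_nonneg)

lemma abs_le_nrm1: "i < dim_vec v \<Longrightarrow> \<bar>v$i\<bar> \<le> nrm1 v"
  unfolding nrm1_def by (rule member_le_sum[of i "{..<dim_vec v}" "\<lambda>i. \<bar>v$i\<bar>"]) auto

lemma nrm1_add: assumes "v \<in> carrier_vec n" "w \<in> carrier_vec n"
  shows "nrm1 (v + w) \<le> nrm1 v + nrm1 w"
proof -
  have "nrm1 (v+w) = (\<Sum>i<n. \<bar>v$i + w$i\<bar>)" unfolding nrm1_def using assms by (intro sum.cong) auto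
  also have "\<dots> \<le> (\<Sum>i<n. \<bar>v$i\<bar> + \<bar>w$i\<bar>)" by (intro sum_mono abs_triangle_ineq)
  also have "\<dots> = nrm1 v + nrm1 w" using assms unfolding nrm1_def by (simp add: sum.distrib)
  finally show ?thesis .
qed
lemma nrm1_mult: assumes A: "A \<in> carrier_mat n m" and v: "v \<in> carrier_vec m"
  shows "nrm1 (A *\<^sub>v v) \<le> msum A * nrm1 v"
proof -
  have "nrm1 (A *\<^sub>v v) = (\<Sum>i<n. \<bar>(A *\<^sub>v v) $ i\<bar>)" unfolding nrm1_def using A by simp
  also have "\<dots> = (\<Sum>i<n. \<bar>\<Sum>j<m. A $$ (i,j) * v $ j\<bar>)"
    by (intro sum.cong refl arg_cong[where f=abs] mult_mat_vec_index_sum[OF A v]) auto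
  also have "\<dots> \<le> (\<Sum>i<n. \<Sum>j<m. \<bar>A $$ (i,j)\<bar> * nrm1 v)"
  proof (intro sum_mono)
    fix i assume "i \<in> {..<n}"
    have "\<bar>\<Sum>j<m. A $$ (i,j) * v $ j\<bar> \<le> (\<Sum>j<m. \<bar>A $$ (i,j) * v $ j\<bar>)" by (rule sum_abs)
    also have "\<dots> \<le> (\<Sum>j<m. \<bar>A $$ (i,j)\<bar> * nrm1 v)"
      using v by (auto simp: abs_mult intro!: sum_mono mult_left_mono abs_le_nrm1)
    finally show "\<bar>\<Sum>j<m. A $$ (i,j) * v $ j\<bar> \<le> (\<Sum>j<m. \<bar>A $$ (i,j)\<bar> * nrm1 v)" .
  qed
  also have "\<dots> = msum A * nrm1 v" using A unfolding msum_def by (simp add: sum_distrib_right)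
  finally show ?thesis .
qed

lemma scalar_decay:
  fixes a b :: "nat \<Rightarrow> real"
  assumes a0: "\<And>k. 0 \<le> a k" and rec: "\<And>k. a (Suc k) \<le> \<theta> * a k + b k"
    and b: "b \<longlonglongrightarrow> 0" and th: "0 \<le> \<theta>" "\<theta> < 1"
  shows "a \<longlonglongrightarrow> 0"
proof (rule LIMSEQ_I)
  fix e :: real assume e: "0 < e"
  have "(e * (1 - \<theta>) / 2) > 0" using e th by auto
  from LIMSEQ_D[OF b this] obtain k0 where k0: "\<And>k. k \<ge> k0 \<Longrightarrow> norm (b k) < e * (1 - \<theta>) / 2" by auto
  have claim: "a (k0 + t) \<le> \<theta> ^ t * a k0 + e / 2" for t
  proof (induction t)
    case 0 then show ?case using e by simp
  next
    case (Suc t)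
    have h0: "a (k0 + Suc t) \<le> \<theta> * a (k0 + t) + b (k0 + t)" using rec[of "k0+t"] by simp
    have h1: "\<theta> * a (k0 + t) \<le> \<theta> * (\<theta> ^ t * a k0 + e / 2)"
      by (rule mult_left_mono[OF Suc th(1)])
    have h2: "b (k0 + t) \<le> e * (1 - \<theta>) / 2" using k0[of "k0+t"] by simp
    have h3: "\<theta> * (\<theta> ^ t * a k0 + e / 2) + e * (1 - \<theta>) / 2 = \<theta> ^ Suc t * a k0 + e / 2"
      by (simp add: distrib_left right_diff_distrib add_divide_distrib diff_divide_distrib)
    show ?case using h0 h1 h2 h3 by linarith
  qed
  have "(\<lambda>t. \<theta> ^ t * a k0) \<longlonglongrightarrow> 0"
    using th by (intro tendsto_mult_left_zero LIMSEQ_power_zero) auto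
  from LIMSEQ_D[OF this, of "e/2"] e obtain t0 where t0: "\<And>t. t \<ge> t0 \<Longrightarrow> norm (\<theta> ^ t * a k0) < e/2" by auto
  show "\<exists>no. \<forall>n\<ge>no. norm (a n - 0) < e"
  proof (intro exI allI impI)
    fix n assume n: "k0 + t0 \<le> n"
    define t where "t = n - k0"
    have t: "n = k0 + t" "t \<ge> t0" using n unfolding t_def by auto
    have "a n \<le> \<theta> ^ t * a k0 + e / 2" using claim t by simp
    also have "\<dots> < e" using t0[OF t(2)] by (simp add: abs_less_iff)
    finally have "a n < e" .
    then show "norm (a n - 0) < e" using a0[of n] by simp
  qed
qed

definition pow_null :: "real mat \<Rightarrow> nat \<Rightarrow> bool" where
  "pow_null A n \<longleftrightarrow> (\<forall>i<n. \<forall>j<n. (\<lambda>k. (A ^\<^sub>m k) $$ (i,j)) \<longlonglongrightarrow> 0)"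

lemma pow_null_vec: assumes A: "A \<in> carrier_mat n n" and pn: "pow_null A n"
  and y: "y \<in> carrier_vec n" and i: "i < n"
  shows "(\<lambda>k. (A ^\<^sub>m k *\<^sub>v y) $ i) \<longlonglongrightarrow> 0"
proof -
  have "(\<lambda>k. \<Sum>j<n. (A ^\<^sub>m k) $$ (i,j) * y $ j) \<longlonglongrightarrow> (\<Sum>j<n. 0 * y $ j)"
    using pn i unfolding pow_null_def by (intro tendsto_sum tendsto_mult tendsto_const) auto
  moreover have "(A ^\<^sub>m k *\<^sub>v y) $ i = (\<Sum>j<n. (A ^\<^sub>m k) $$ (i,j) * y $ j)" for k
    by (rule mult_mat_vec_index_sum[OF pow_carrier_mat[OF A] y i])
  ultimately show ?thesis by simp
qed

lemma pow_nullI: assumes A: "A \<in> carrier_mat n n"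
  and h: "\<And>y i. y \<in> carrier_vec n \<Longrightarrow> i < n \<Longrightarrow> (\<lambda>k. (A ^\<^sub>m k *\<^sub>v y) $ i) \<longlonglongrightarrow> 0"
  shows "pow_null A n"
  unfolding pow_null_def
proof (intro allI impI)
  fix i j assume i: "i < n" and j: "j < n"
  have "(A ^\<^sub>m k *\<^sub>v unit_vec n j) $ i = (A ^\<^sub>m k) $$ (i,j)" for k
  proof -
    have "(A ^\<^sub>m k *\<^sub>v unit_vec n j) $ i = (\<Sum>j'<n. (A ^\<^sub>m k) $$ (i,j') * unit_vec n j $ j')"
      using A i by (intro mult_mat_vec_index_sum) auto
    also have "\<dots> = (\<Sum>j'<n. if j' = j then (A ^\<^sub>m k) $$ (i,j') else 0)"
      by (rule sum.cong) (auto simp: unit_vec_def)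
    also have "\<dots> = (A ^\<^sub>m k) $$ (i,j)" using j by simp
    finally show ?thesis .
  qed
  then show "(\<lambda>k. (A ^\<^sub>m k) $$ (i,j)) \<longlonglongrightarrow> 0" using h[of "unit_vec n j" i] i by simp
qed

lemma pow_Suc_vec: assumes A: "A \<in> carrier_mat n n" and v: "v \<in> carrier_vec n"
  shows "A ^\<^sub>m (Suc j) *\<^sub>v v = A ^\<^sub>m j *\<^sub>v (A *\<^sub>v v)"
proof -
  have "A ^\<^sub>m (Suc j) = A ^\<^sub>m j * A" by simp
  then show ?thesis using assoc_mult_mat_vec[OF pow_carrier_mat[OF A] A v, of j] by simp
qed

lemma msum_pow_tendsto: assumes A: "A \<in> carrier_mat n n" and pn: "pow_null A n"
  shows "(\<lambda>k. msum (A ^\<^sub>m k)) \<longlonglongrightarrow> 0"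
proof -
  have "(\<lambda>k. \<Sum>i<n. \<Sum>j<n. \<bar>(A ^\<^sub>m k) $$ (i,j)\<bar>) \<longlonglongrightarrow> (\<Sum>i<n. \<Sum>j<n. \<bar>0::real\<bar>)"
    using pn unfolding pow_null_def by (intro tendsto_sum tendsto_rabs) auto
  moreover have "msum (A ^\<^sub>m k) = (\<Sum>i<n. \<Sum>j<n. \<bar>(A ^\<^sub>m k) $$ (i,j)\<bar>)" for k
  proof -
    have d: "dim_row (A ^\<^sub>m k) = n" "dim_col (A ^\<^sub>m k) = n"
      by (metis carrier_matD(1) pow_carrier_mat[OF A]) (metis carrier_matD(2) pow_carrier_mat[OF A])
    show ?thesis unfolding msum_def d ..
  qed
  ultimately show ?thesis by simp
qed

lemma lyapunov:
  assumes A: "A \<in> carrier_mat n n" and pn: "pow_null A n"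
  shows "\<exists>L c \<theta>. 0 \<le> \<theta> \<and> \<theta> < 1 \<and> 0 \<le> c \<and>
     (\<forall>v\<in>carrier_vec n. nrm1 v \<le> L v \<and> L v \<le> c * nrm1 v \<and> L (A *\<^sub>v v) \<le> \<theta> * L v) \<and>
     (\<forall>v\<in>carrier_vec n. \<forall>w\<in>carrier_vec n. L (v + w) \<le> L v + L w)"
proof -
  from LIMSEQ_D[OF msum_pow_tendsto[OF A pn], of "1/2"] obtain k0
    where k0: "\<And>k. k \<ge> k0 \<Longrightarrow> norm (msum (A ^\<^sub>m k) - 0) < 1/2" by auto
  define K where "K = max k0 1"
  have K1: "K \<ge> 1" and KK: "msum (A ^\<^sub>m K) \<le> 1/2" using k0[of K] unfolding K_def by auto
  define \<theta> where "\<theta> = root K (1/2)"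
  have th0: "0 < \<theta>" unfolding \<theta>_def using K1 by simp
  have th1: "\<theta> < 1" unfolding \<theta>_def using K1 real_root_less_iff[of K "1/2" 1] by simp
  have thK: "\<theta> ^ K = 1/2" unfolding \<theta>_def using K1 by (simp add: real_root_pow_pos2)
  define \<iota> where "\<iota> = 1 / \<theta>"
  have io0: "0 < \<iota>" unfolding \<iota>_def using th0 by simp
  have thio: "\<theta> * \<iota> = 1" unfolding \<iota>_def using th0 by simp
  have ioK: "\<iota> ^ K = 2" unfolding \<iota>_def power_one_over thK by simp
  define L where "L v = (\<Sum>j<K. \<iota> ^ j * nrm1 (A ^\<^sub>m j *\<^sub>v v))" for v
  define c where "c = (\<Sum>j<K. \<iota> ^ j * msum (A ^\<^sub>m j))"
  have c0: "0 \<le> c" unfolding c_def using io0 by (intro sum_nonneg mult_nonneg_nonneg msum_ge0) auto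
  have P1: "nrm1 v \<le> L v" if v: "v \<in> carrier_vec n" for v
  proof -
    have "nrm1 v = \<iota> ^ 0 * nrm1 (A ^\<^sub>m 0 *\<^sub>v v)" using A v by simp
    also have "\<dots> \<le> L v" unfolding L_def using K1 io0
      by (intro member_le_sum[of 0 "{..<K}" "\<lambda>j. \<iota> ^ j * nrm1 (A ^\<^sub>m j *\<^sub>v v)"] mult_nonneg_nonneg nrm1_ge0) auto
    finally show ?thesis .
  qed
  have P2: "L v \<le> c * nrm1 v" if v: "v \<in> carrier_vec n" for v
  proof -
    have "L v \<le> (\<Sum>j<K. \<iota> ^ j * (msum (A ^\<^sub>m j) * nrm1 v))" unfolding L_def
      using io0 by (intro sum_mono mult_left_mono nrm1_mult[OF pow_carrier_mat[OF A] v]) auto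
    also have "\<dots> = c * nrm1 v" unfolding c_def by (simp add: sum_distrib_right mult.assoc)
    finally show ?thesis .
  qed
  have P3: "L (A *\<^sub>v v) \<le> \<theta> * L v" if v: "v \<in> carrier_vec n" for v
  proof -
    define x where "x j = nrm1 (A ^\<^sub>m j *\<^sub>v v)" for j
    define f where "f j = \<iota> ^ j * x j" for j
    have "L (A *\<^sub>v v) = (\<Sum>j<K. \<iota> ^ j * x (Suc j))" unfolding L_def x_def
      using pow_Suc_vec[OF A v] by simp
    also have "\<dots> = \<theta> * (\<Sum>j<K. f (Suc j))" unfolding f_def sum_distrib_left
      by (intro sum.cong refl) (simp add: thio mult.assoc[symmetric])
    also have "(\<Sum>j<K. f (Suc j)) = (\<Sum>j<K. f j) + f K - f 0"
      using sum.lessThan_Suc_shift[of f K] sum.lessThan_Suc[of f K] by simp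
    also have "f K \<le> f 0"
    proof -
      have "x K \<le> msum (A ^\<^sub>m K) * nrm1 v" unfolding x_def by (rule nrm1_mult[OF pow_carrier_mat[OF A] v])
      also have "\<dots> \<le> 1/2 * nrm1 v" using KK nrm1_ge0[of v] by (intro mult_right_mono) auto
      finally have "x K \<le> 1/2 * nrm1 v" .
      moreover have "x 0 = nrm1 v" unfolding x_def using A v by simp
      ultimately show ?thesis unfolding f_def using ioK by simp
    qed
    then have "\<theta> * ((\<Sum>j<K. f j) + f K - f 0) \<le> \<theta> * (\<Sum>j<K. f j)" using th0 by (intro mult_left_mono) auto
    also have "(\<Sum>j<K. f j) = L v" unfolding f_def x_def L_def by simp
    finally show ?thesis by simp
  qed
  have P4: "L (v + w) \<le> L v + L w" if v: "v \<in> carrier_vec n" and w: "w \<in> carrier_vec n" for v w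
  proof -
    have "L (v + w) \<le> (\<Sum>j<K. \<iota> ^ j * nrm1 (A ^\<^sub>m j *\<^sub>v v) + \<iota> ^ j * nrm1 (A ^\<^sub>m j *\<^sub>v w))"
      unfolding L_def
    proof (intro sum_mono)
      fix j
      have "A ^\<^sub>m j *\<^sub>v (v + w) = A ^\<^sub>m j *\<^sub>v v + A ^\<^sub>m j *\<^sub>v w"
        by (rule mult_add_distrib_mat_vec[OF pow_carrier_mat[OF A] v w])
      then have "nrm1 (A ^\<^sub>m j *\<^sub>v (v + w)) \<le> nrm1 (A ^\<^sub>m j *\<^sub>v v) + nrm1 (A ^\<^sub>m j *\<^sub>v w)"
        using nrm1_add[OF mult_mat_vec_carrier[OF pow_carrier_mat[OF A] v] mult_mat_vec_carrier[OF pow_carrier_mat[OF A] w]] by simp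
      then show "\<iota> ^ j * nrm1 (A ^\<^sub>m j *\<^sub>v (v + w)) \<le> \<iota> ^ j * nrm1 (A ^\<^sub>m j *\<^sub>v v) + \<iota> ^ j * nrm1 (A ^\<^sub>m j *\<^sub>v w)"
        using io0 by (simp add: distrib_left[symmetric] mult_left_mono)
    qed
    also have "\<dots> = L v + L w" unfolding L_def by (simp add: sum.distrib)
    finally show ?thesis .
  qed
  show ?thesis using th0 th1 c0 P1 P2 P3 P4 by (intro exI[of _ L] exI[of _ c] exI[of _ \<theta>]) auto
qed

lemmas [simp] = minus_carrier_mat

lemma pow_fix: assumes A: "A \<in> carrier_mat n n" and v: "v \<in> carrier_vec n" and fx: "A *\<^sub>v v = v"
  shows "A ^\<^sub>m k *\<^sub>v v = v"
proof (induction k)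
  case 0 then show ?case using v A by simp
next
  case (Suc k) then show ?case using pow_Suc_vec[OF A v, of k] fx by simp
qed

lemma inv_I_minus:
  assumes A: "A \<in> carrier_mat n n" and pn: "pow_null A n"
  shows "invertible_mat (1\<^sub>m n - A) \<and> minv (1\<^sub>m n - A) \<in> carrier_mat n n \<and>
         (1\<^sub>m n - A) * minv (1\<^sub>m n - A) = 1\<^sub>m n \<and> minv (1\<^sub>m n - A) * (1\<^sub>m n - A) = 1\<^sub>m n"
proof -
  define B where "B = 1\<^sub>m n - A"
  have B: "B \<in> carrier_mat n n" unfolding B_def using A by simp
  have "det B \<noteq> 0"
  proof
    assume "det B = 0"
    then obtain v where v: "v \<in> carrier_vec n" "v \<noteq> 0\<^sub>v n" "B *\<^sub>v v = 0\<^sub>v n"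
      using det_0_iff_vec_prod_zero[OF B] by auto
    have "B *\<^sub>v v = v - A *\<^sub>v v" unfolding B_def
      using minus_mult_distrib_mat_vec[OF one_carrier_mat A v(1)] v(1) by simp
    then have fx: "A *\<^sub>v v = v"
    proof -
      assume h: "B *\<^sub>v v = v - A *\<^sub>v v"
      show ?thesis
      proof (rule eq_vecI)
        fix i assume "i < dim_vec v"
        then have i: "i < n" using v by simp
        have "(B *\<^sub>v v) $ i = 0" using v(3) i by simp
        moreover have "(B *\<^sub>v v) $ i = v $ i - (A *\<^sub>v v) $ i" using h i A v by simp
        ultimately show "(A *\<^sub>v v) $ i = v $ i" by simp
      qed (use A v in simp)
    qed
    have "v = 0\<^sub>v n"
    proof (rule eq_vecI)
      fix i assume "i < dim_vec (0\<^sub>v n :: real vec)"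
      then have i: "i < n" by simp
      have "(\<lambda>k. (A ^\<^sub>m k *\<^sub>v v) $ i) \<longlonglongrightarrow> 0" by (rule pow_null_vec[OF A pn v(1) i])
      then have "(\<lambda>k. v $ i) \<longlonglongrightarrow> 0" using pow_fix[OF A v(1) fx] by simp
      then have "v $ i = 0" using LIMSEQ_const_iff by blast
      then show "v $ i = 0\<^sub>v n $ i" using i by simp
    qed (use v in simp)
    then show False using v by simp
  qed
  from det_non_zero_imp_unit[OF B this, of undefined]
  obtain C where C: "C \<in> carrier_mat n n" "C * B = 1\<^sub>m n" "B * C = 1\<^sub>m n"
    unfolding Units_def ring_mat_simps by auto
  have ex: "\<exists>C. C \<in> carrier_mat (dim_row B) (dim_row B) \<and> inverts_mat B C \<and> inverts_mat C B"
    using C B unfolding inverts_mat_def by auto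
  have inv: "invertible_mat B" using C B unfolding invertible_mat_def inverts_mat_def square_mat.simps by auto
  have m: "minv B \<in> carrier_mat (dim_row B) (dim_row B) \<and> inverts_mat B (minv B) \<and> inverts_mat (minv B) B"
    unfolding minv_def by (rule someI_ex[OF ex])
  show ?thesis using m inv B unfolding B_def[symmetric] inverts_mat_def by auto
qed

lemma affine_conv:
  assumes A: "A \<in> carrier_mat n n" and pn: "pow_null A n"
    and x: "\<And>k. x k \<in> carrier_vec n" and u: "\<And>k. u k \<in> carrier_vec n"
    and rec: "\<And>k. x (Suc k) = A *\<^sub>v x k + u k"
    and us: "us \<in> carrier_vec n" and ut: "\<And>r. r < n \<Longrightarrow> (\<lambda>k. u k $ r) \<longlonglongrightarrow> us $ r"
  shows "vec_tendsto x (minv (1\<^sub>m n - A) *\<^sub>v us)"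
proof -
  note I = inv_I_minus[OF A pn]
  define B where "B = minv (1\<^sub>m n - A)"
  have B: "B \<in> carrier_mat n n" and IB: "(1\<^sub>m n - A) * B = 1\<^sub>m n" using I unfolding B_def by auto
  define xs where "xs = B *\<^sub>v us"
  have xs: "xs \<in> carrier_vec n" unfolding xs_def using B us by simp
  have "(1\<^sub>m n - A) *\<^sub>v xs = us" unfolding xs_def
    using assoc_mult_mat_vec[of "1\<^sub>m n - A" n n B n us, symmetric] A B us IB by simp
  moreover have "(1\<^sub>m n - A) *\<^sub>v xs = xs - A *\<^sub>v xs"
    using minus_mult_distrib_mat_vec[OF one_carrier_mat A xs] xs by simp
  ultimately have usx: "us = xs - A *\<^sub>v xs" by simp
  have xsfix: "xs $ i = (A *\<^sub>v xs) $ i + us $ i" if i: "i < n" for i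
  proof -
    have "us $ i = xs $ i - (A *\<^sub>v xs) $ i" unfolding usx using i A xs by simp
    then show ?thesis by simp
  qed
  obtain L c \<theta> where th: "0 \<le> \<theta>" "\<theta> < 1" and c: "0 \<le> c"
    and L: "\<And>v. v \<in> carrier_vec n \<Longrightarrow> nrm1 v \<le> L v \<and> L v \<le> c * nrm1 v \<and> L (A *\<^sub>v v) \<le> \<theta> * L v"
    and Ladd: "\<And>v w. v \<in> carrier_vec n \<Longrightarrow> w \<in> carrier_vec n \<Longrightarrow> L (v + w) \<le> L v + L w"
    using lyapunov[OF A pn] by blast
  define e where "e k = x k - xs" for k
  define d where "d k = u k - us" for k
  have e: "e k \<in> carrier_vec n" for k unfolding e_def using x xs by simp
  have d: "d k \<in> carrier_vec n" for k unfolding d_def using u us by simp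
  have erec: "e (Suc k) = A *\<^sub>v e k + d k" for k
  proof (rule eq_vecI)
    fix i assume "i < dim_vec (A *\<^sub>v e k + d k)"
    then have i: "i < n" using A d[of k] by simp
    have "(A *\<^sub>v e k) $ i = (A *\<^sub>v x k) $ i - (A *\<^sub>v xs) $ i"
      unfolding e_def using mult_minus_distrib_mat_vec[OF A x xs] i A by simp
    then show "e (Suc k) $ i = (A *\<^sub>v e k + d k) $ i"
      unfolding e_def d_def using rec[of k] i A x[of k] u[of k] us xs xsfix[OF i] by simp
  qed (use A e[of "Suc k"] d[of k] in simp)
  define a where "a k = L (e k)" for k
  have a0: "0 \<le> a k" for k unfolding a_def using L[OF e[of k]] nrm1_ge0[of "e k"] by linarith
  have arec: "a (Suc k) \<le> \<theta> * a k + c * nrm1 (d k)" for k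
  proof -
    have "a (Suc k) \<le> L (A *\<^sub>v e k) + L (d k)" unfolding a_def erec
      using Ladd[OF mult_mat_vec_carrier[OF A e] d] .
    then show ?thesis using L[OF e[of k]] L[OF d[of k]] unfolding a_def by linarith
  qed
  have dn: "(\<lambda>k. c * nrm1 (d k)) \<longlonglongrightarrow> 0"
  proof -
    have "(\<lambda>k. \<Sum>r<n. \<bar>u k $ r - us $ r\<bar>) \<longlonglongrightarrow> (\<Sum>r<n. \<bar>us $ r - us $ r\<bar>)"
      using ut by (intro tendsto_sum tendsto_rabs tendsto_diff tendsto_const) auto
    moreover have "nrm1 (d k) = (\<Sum>r<n. \<bar>u k $ r - us $ r\<bar>)" for k
      unfolding nrm1_def d_def using u us by (intro sum.cong) auto
    ultimately have "(\<lambda>k. nrm1 (d k)) \<longlonglongrightarrow> 0" by simp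
    then show ?thesis by (intro tendsto_mult_right_zero)
  qed
  have aT: "a \<longlonglongrightarrow> 0" by (rule scalar_decay[OF a0 arec dn th])
  show ?thesis unfolding vec_tendsto_def
  proof (intro conjI allI impI)
    fix k show "dim_vec (x k) = dim_vec (minv (1\<^sub>m n - A) *\<^sub>v us)" using x B unfolding B_def by simp
  next
    fix r assume "r < dim_vec (minv (1\<^sub>m n - A) *\<^sub>v us)"
    then have r: "r < n" using B unfolding B_def by simp
    have eb: "\<bar>e k $ r\<bar> \<le> a k" for k using abs_le_nrm1[of r "e k"] e[of k] r L[OF e[of k]] unfolding a_def by auto
    have "(\<lambda>k. e k $ r) \<longlonglongrightarrow> 0"
    proof (rule tendsto_sandwich[of "\<lambda>k. - a k" _ _ a])
      show "\<forall>\<^sub>F k in sequentially. - a k \<le> e k $ r" by (intro always_eventually allI) (use eb in \<open>smt (verit)\<close>)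
      show "\<forall>\<^sub>F k in sequentially. e k $ r \<le> a k" using eb by (intro always_eventually allI) (auto simp: abs_le_iff)
      show "(\<lambda>k. - a k) \<longlonglongrightarrow> 0" using tendsto_minus[OF aT] by simp
    qed (rule aT)
    then have "(\<lambda>k. x k $ r - xs $ r) \<longlonglongrightarrow> 0" unfolding e_def using x xs r by simp
    then show "(\<lambda>k. x k $ r) \<longlonglongrightarrow> (minv (1\<^sub>m n - A) *\<^sub>v us) $ r"
      unfolding xs_def B_def using LIM_zero_iff by blast
  qed
qed

lemma smult_pow_mat: assumes A: "(A :: complex mat) \<in> carrier_mat n n"
  shows "(c \<cdot>\<^sub>m A) ^\<^sub>m k = (c ^ k) \<cdot>\<^sub>m (A ^\<^sub>m k)"
proof (induction k)
  case 0 show ?case using A by (intro eq_matI) auto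
next
  case (Suc k)
  have "(c \<cdot>\<^sub>m A) ^\<^sub>m Suc k = ((c ^ k) \<cdot>\<^sub>m (A ^\<^sub>m k)) * (c \<cdot>\<^sub>m A)" using Suc by simp
  also have "\<dots> = (c ^ k) \<cdot>\<^sub>m ((A ^\<^sub>m k) * (c \<cdot>\<^sub>m A))"
    by (rule mult_smult_assoc_mat[OF pow_carrier_mat[OF A] smult_carrier_mat[OF A]])
  also have "(A ^\<^sub>m k) * (c \<cdot>\<^sub>m A) = c \<cdot>\<^sub>m (A ^\<^sub>m k * A)"
    by (rule mult_smult_distrib[OF pow_carrier_mat[OF A] A])
  also have "(c ^ k) \<cdot>\<^sub>m (c \<cdot>\<^sub>m (A ^\<^sub>m k * A)) = (c ^ Suc k) \<cdot>\<^sub>m (A ^\<^sub>m k * A)"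
    by (intro eq_matI) auto
  finally show ?case by simp
qed

lemma specrad_pow_null:
  fixes A :: "real mat"
  assumes A: "A \<in> carrier_mat n n" and n: "0 < n"
    and sr: "spectral_radius (map_mat complex_of_real A) < 1"
  shows "pow_null A n"
proof -
  define Ac where "Ac = map_mat complex_of_real A"
  have Ac: "Ac \<in> carrier_mat n n" unfolding Ac_def using A by simp
  define \<rho> where "\<rho> = spectral_radius Ac"
  have rho0: "0 \<le> \<rho>" using spectral_radius_mem_max(1)[OF Ac n] unfolding \<rho>_def by auto
  have rho1: "\<rho> < 1" using sr unfolding \<rho>_def Ac_def .
  define r where "r = (1 + \<rho>) / 2"
  have r0: "0 < r" and r1: "r < 1" and rr: "\<rho> < r" using rho0 rho1 unfolding r_def by auto
  define c where "c = complex_of_real (1 / r)"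
  have c0: "c \<noteq> 0" unfolding c_def using r0 by simp
  define B where "B = c \<cdot>\<^sub>m Ac"
  have B: "B \<in> carrier_mat n n" unfolding B_def using Ac by simp
  have srB: "spectral_radius B < 1"
  proof -
    from spectral_radius_mem_max(1)[OF B n] obtain l where l: "l \<in> spectrum B" "spectral_radius B = norm l"
      by auto
    from l(1) obtain v where v: "v \<in> carrier_vec n" "v \<noteq> 0\<^sub>v n" "B *\<^sub>v v = l \<cdot>\<^sub>v v"
      unfolding spectrum_def eigenvalue_def eigenvector_def using B by auto
    have "Ac *\<^sub>v v = (l / c) \<cdot>\<^sub>v v"
    proof (rule eq_vecI)
      fix i assume "i < dim_vec ((l / c) \<cdot>\<^sub>v v)"
      then have i: "i < n" using v by simp
      have "(B *\<^sub>v v) $ i = c * (Ac *\<^sub>v v) $ i"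
        using i Ac v(1) unfolding B_def by (simp add: scalar_prod_def sum_distrib_left mult.assoc)
      then have "c * (Ac *\<^sub>v v) $ i = l * v $ i" using v(3) i v(1) by simp
      then show "(Ac *\<^sub>v v) $ i = ((l / c) \<cdot>\<^sub>v v) $ i" using i v(1) c0 by (simp add: field_simps)
    qed (use Ac v in simp)
    then have "eigenvalue Ac (l / c)" unfolding eigenvalue_def eigenvector_def using v Ac by auto
    then have "norm (l / c) \<le> \<rho>" unfolding \<rho>_def
      by (intro spectral_radius_mem_max(2)[OF Ac n]) (auto simp: spectrum_def)
    then have "norm l * r \<le> \<rho>" unfolding c_def using r0 by (simp add: norm_divide norm_mult)
    then have "norm l * r < r" using rr by simp
    then have "norm l < 1" using r0 by simp
    then show ?thesis using l(2) by simp
  qed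
  from spectral_radius_jnf_norm_bound_less_1_upper_triangular[OF B srB]
  obtain C where C: "\<And>k. norm_bound (B ^\<^sub>m k) C" by auto
  show ?thesis unfolding pow_null_def
  proof (intro allI impI)
    fix i j assume i: "i < n" and j: "j < n"
    have bd: "\<bar>(A ^\<^sub>m k) $$ (i,j)\<bar> \<le> C * r ^ k" for k
    proof -
      have "norm ((B ^\<^sub>m k) $$ (i,j)) \<le> C" using C[of k] i j B unfolding norm_bound_def by auto
      moreover have "(B ^\<^sub>m k) $$ (i,j) = c ^ k * complex_of_real ((A ^\<^sub>m k) $$ (i,j))"
      proof -
        have "B ^\<^sub>m k = c ^ k \<cdot>\<^sub>m (Ac ^\<^sub>m k)" unfolding B_def by (rule smult_pow_mat[OF Ac])
        moreover have "Ac ^\<^sub>m k = map_mat complex_of_real (A ^\<^sub>m k)"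
          unfolding Ac_def by (rule of_real_hom.mat_hom_pow[OF A, symmetric])
        ultimately show ?thesis using i j A by simp
      qed
      ultimately have "(1/r) ^ k * \<bar>(A ^\<^sub>m k) $$ (i,j)\<bar> \<le> C" unfolding c_def
        using r0 by (simp add: norm_mult norm_power norm_divide)
      then show ?thesis using r0 by (simp add: field_simps power_divide)
    qed
    have "(\<lambda>k. C * r ^ k) \<longlonglongrightarrow> 0" using r0 r1 by (intro tendsto_mult_right_zero LIMSEQ_power_zero) auto
    show "(\<lambda>k. (A ^\<^sub>m k) $$ (i,j)) \<longlonglongrightarrow> 0"
    proof (rule tendsto_sandwich[of "\<lambda>k. - (C * r ^ k)" _ _ "\<lambda>k. C * r ^ k"])
      show "\<forall>\<^sub>F k in sequentially. - (C * r ^ k) \<le> (A ^\<^sub>m k) $$ (i,j)"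
        by (intro always_eventually allI) (use bd in \<open>smt (verit)\<close>)
      show "\<forall>\<^sub>F k in sequentially. (A ^\<^sub>m k) $$ (i,j) \<le> C * r ^ k"
        by (intro always_eventually allI) (use bd in \<open>smt (verit)\<close>)
      show "(\<lambda>k. - (C * r ^ k)) \<longlonglongrightarrow> 0" using tendsto_minus[OF \<open>(\<lambda>k. C * r ^ k) \<longlonglongrightarrow> 0\<close>] by simp
    qed fact
  qed
qed

lemma mstep_nonneg: assumes st: "stochastic_matrix N Q" and j: "j < N"
  shows "0 \<le> mstep N Q k i j"
  using j
proof (induction k arbitrary: j)
  case 0 then show ?case by simp
next
  case (Suc k)
  show ?case using Suc st unfolding stochastic_matrix_def by (auto intro!: sum_nonneg mult_nonneg_nonneg)
qed

lemma mstep_rowsum: assumes st: "stochastic_matrix N Q" and i: "i < N"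
  shows "(\<Sum>j<N. mstep N Q k i j) = 1"
proof (induction k)
  case 0 show ?case using i by simp
next
  case (Suc k)
  have "(\<Sum>j<N. mstep N Q (Suc k) i j) = (\<Sum>j<N. \<Sum>l<N. mstep N Q k i l * Q l j)" by simp
  also have "\<dots> = (\<Sum>l<N. \<Sum>j<N. mstep N Q k i l * Q l j)" by (rule sum.swap)
  also have "\<dots> = (\<Sum>l<N. mstep N Q k i l * (\<Sum>j<N. Q l j))" by (simp only: sum_distrib_left)
  also have "\<dots> = (\<Sum>l<N. mstep N Q k i l)" using st unfolding stochastic_matrix_def by simp
  finally show ?case using Suc by simp
qed

lemma mstep_CK: assumes j: "j < N"
  shows "mstep N Q (a + b) i j = (\<Sum>l<N. mstep N Q a i l * mstep N Q b l j)"
  using j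
proof (induction b arbitrary: j)
  case 0
  have "(\<Sum>l<N. mstep N Q a i l * mstep N Q 0 l j) = (\<Sum>l<N. if l = j then mstep N Q a i l else 0)"
    by (intro sum.cong) auto
  also have "\<dots> = mstep N Q a i j" using 0 by simp
  finally show ?case by simp
next
  case (Suc b)
  have "mstep N Q (a + Suc b) i j = (\<Sum>l'<N. mstep N Q (a + b) i l' * Q l' j)" by simp
  also have "\<dots> = (\<Sum>l'<N. (\<Sum>l<N. mstep N Q a i l * mstep N Q b l l') * Q l' j)"
    using Suc.IH by simp
  also have "\<dots> = (\<Sum>l'<N. \<Sum>l<N. mstep N Q a i l * (mstep N Q b l l' * Q l' j))"
    by (simp only: sum_distrib_right mult.assoc)
  also have "\<dots> = (\<Sum>l<N. \<Sum>l'<N. mstep N Q a i l * (mstep N Q b l l' * Q l' j))" by (rule sum.swap)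
  also have "\<dots> = (\<Sum>l<N. mstep N Q a i l * (\<Sum>l'<N. mstep N Q b l l' * Q l' j))"
    by (simp only: sum_distrib_left)
  also have "\<dots> = (\<Sum>l<N. mstep N Q a i l * mstep N Q (Suc b) l j)" by simp
  finally show ?case .
qed

lemma mstep_one: assumes i: "i < N" shows "mstep N Q 1 i j = Q i j"
proof -
  have "mstep N Q 1 i j = (\<Sum>l<N. (if i = l then 1 else 0) * Q l j)" by simp
  also have "\<dots> = (\<Sum>l<N. if l = i then Q l j else 0)" by (intro sum.cong) auto
  also have "\<dots> = Q i j" using i by simp
  finally show ?thesis .
qed

lemma mstep_ge_term: assumes st: "stochastic_matrix N Q" and j: "j < N" and l: "l < N"
  shows "mstep N Q a i l * mstep N Q b l j \<le> mstep N Q (a + b) i j"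
proof -
  have "mstep N Q a i l * mstep N Q b l j \<le> (\<Sum>l<N. mstep N Q a i l * mstep N Q b l j)"
    using l st j
    by (intro member_le_sum[of l "{..<N}" "\<lambda>l. mstep N Q a i l * mstep N Q b l j"])
       (auto intro!: mult_nonneg_nonneg mstep_nonneg)
  then show ?thesis using mstep_CK[OF j] by simp
qed

lemma semigroup_mult_mem: assumes cl: "\<And>x y. x \<in> S \<Longrightarrow> y \<in> S \<Longrightarrow> x + y \<in> S" and x: "x \<in> S"
  shows "Suc m * x \<in> S"
proof (induction m)
  case 0 then show ?case using x by simp
next
  case (Suc m) then show ?case using cl[OF x Suc.IH] by (simp add: algebra_simps)
qed

lemma numerical_semigroup:
  fixes S :: "nat set"
  assumes pos: "\<And>x. x \<in> S \<Longrightarrow> 0 < x"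
    and cl: "\<And>x y. x \<in> S \<Longrightarrow> y \<in> S \<Longrightarrow> x + y \<in> S"
    and g1: "Gcd S = 1"
  shows "\<exists>K. \<forall>k\<ge>K. k \<in> S"
proof -
  have "S \<noteq> {}" using g1 by auto
  then obtain a where a: "a \<in> S" by auto
  define D where "D = {d. 0 < d \<and> (\<exists>x\<in>S. x + d \<in> S)}"
  have "a \<in> D" unfolding D_def using a pos[OF a] cl[OF a a] by auto
  define g where "g = (LEAST d. d \<in> D)"
  have gD: "g \<in> D" unfolding g_def using \<open>a \<in> D\<close> by (rule LeastI)
  have gmin: "\<And>d. d \<in> D \<Longrightarrow> g \<le> d" unfolding g_def by (rule Least_le)
  from gD obtain x0 where x0: "x0 \<in> S" "x0 + g \<in> S" and g0: "0 < g" unfolding D_def by auto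
  have dvd: "g dvd s" if s: "s \<in> S" for s
  proof -
    define q where "q = s div g"
    define r where "r = s mod g"
    have sqr: "s = q * g + r" unfolding q_def r_def by simp
    have rg: "r < g" unfolding r_def using g0 by simp
    have y1: "s + Suc q * x0 \<in> S" using cl[OF s semigroup_mult_mem[OF cl x0(1)]] .
    have y2: "Suc q * (x0 + g) \<in> S" by (rule semigroup_mult_mem[OF cl x0(2)])
    have "(s + Suc q * x0) + (g - r) = Suc q * (x0 + g)" using sqr rg by (simp add: algebra_simps)
    then have "g - r \<in> D" unfolding D_def using y1 y2 rg by (auto intro!: bexI[of _ "s + Suc q * x0"])
    then have "g \<le> g - r" by (rule gmin)
    then have "r = 0" using rg g0 by simp
    then show ?thesis unfolding r_def by auto
  qed
  have "g dvd Gcd S" by (rule Gcd_greatest) (use dvd in auto)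
  then have g: "g = 1" using g1 by simp
  have x0p: "0 < x0" using pos[OF x0(1)] .
  show ?thesis
  proof (intro exI allI impI)
    fix n assume n: "x0 * x0 \<le> n"
    define q where "q = n div x0"
    define r where "r = n mod x0"
    have nqr: "n = q * x0 + r" unfolding q_def r_def by simp
    have rx: "r < x0" unfolding r_def using x0p by simp
    have qx: "x0 \<le> q"
    proof (rule ccontr)
      assume "\<not> x0 \<le> q"
      then have "q + 1 \<le> x0" by simp
      then have "(q + 1) * x0 \<le> x0 * x0" by (rule mult_right_mono) simp
      then show False using n nqr rx by (simp add: algebra_simps)
    qed
    have qrr: "q - r + r = q" using rx qx by simp
    have "(q - r) * x0 + r * x0 = (q - r + r) * x0" by (simp only: add_mult_distrib)
    then have n2: "n = (q - r) * x0 + r * (x0 + 1)" using nqr qrr by simp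
    have qr: "0 < q - r" using rx qx by simp
    have t1: "(q - r) * x0 \<in> S"
    proof -
      have e: "Suc (q - r - 1) = q - r" using qr by simp
      show ?thesis using semigroup_mult_mem[OF cl x0(1), of "q - r - 1"] unfolding e .
    qed
    show "n \<in> S"
    proof (cases "r = 0")
      case True then show ?thesis using t1 n2 by simp
    next
      case False
      have e: "Suc (r - 1) = r" using False by simp
      have "r * (x0 + 1) \<in> S" using semigroup_mult_mem[OF cl x0(2), of "r - 1"] g unfolding e by simp
      then show ?thesis using cl[OF t1] n2 by simp
    qed
  qed
qed

lemma sum_shift_expand:
  fixes w x :: "nat \<Rightarrow> real"
  shows "(\<Sum>l<N. (w l - e) * (x l - c)) = (\<Sum>l<N. w l * x l) - c * (\<Sum>l<N. w l) - e * (\<Sum>l<N. x l) + e * c * N"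
proof -
  have "(\<Sum>l<N. (w l - e) * (x l - c)) = (\<Sum>l<N. w l * x l - c * w l - e * x l + e * c)"
    by (rule sum.cong) (simp_all add: algebra_simps)
  also have "\<dots> = (\<Sum>l<N. w l * x l) - c * (\<Sum>l<N. w l) - e * (\<Sum>l<N. x l) + e * c * N"
    by (simp add: sum.distrib sum_subtractf sum_distrib_left)
  finally show ?thesis .
qed

lemma doeblin_ineq:
  fixes w w' x :: "nat \<Rightarrow> real"
  assumes w: "\<And>l. l < N \<Longrightarrow> e \<le> w l" and w': "\<And>l. l < N \<Longrightarrow> e \<le> w' l"
    and sw: "(\<Sum>l<N. w l) = 1" and sw': "(\<Sum>l<N. w' l) = 1"
    and x: "\<And>l. l < N \<Longrightarrow> lo \<le> x l \<and> x l \<le> hi"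
  shows "(\<Sum>l<N. w l * x l) - (\<Sum>l<N. w' l * x l) \<le> (1 - N * e) * (hi - lo)"
proof -
  define c where "c = (hi + lo) / 2"
  have id: "(\<Sum>l<N. w l * x l) - (\<Sum>l<N. w' l * x l) =
     (\<Sum>l<N. (w l - e) * (x l - c)) + (\<Sum>l<N. (w' l - e) * (c - x l))"
  proof -
    have "(\<Sum>l<N. (w' l - e) * (c - x l)) = - (\<Sum>l<N. (w' l - e) * (x l - c))"
      by (simp add: sum_negf[symmetric] algebra_simps)
    then show ?thesis using sum_shift_expand[of w e x c N] sum_shift_expand[of w' e x c N] sw sw' by simp
  qed
  have xc: "x l - c \<le> (hi - lo)/2" "c - x l \<le> (hi - lo)/2" if "l < N" for l
    using x[OF that] unfolding c_def by (simp_all add: field_simps)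
  have b1: "(\<Sum>l<N. (w l - e) * (x l - c)) \<le> (\<Sum>l<N. (w l - e) * ((hi - lo) / 2))"
  proof (rule sum_mono)
    fix l assume "l \<in> {..<N}" then have l: "l < N" by simp
    show "(w l - e) * (x l - c) \<le> (w l - e) * ((hi - lo) / 2)"
      by (rule mult_left_mono[OF xc(1)[OF l]]) (use w[OF l] in simp)
  qed
  have b2: "(\<Sum>l<N. (w' l - e) * (c - x l)) \<le> (\<Sum>l<N. (w' l - e) * ((hi - lo) / 2))"
  proof (rule sum_mono)
    fix l assume "l \<in> {..<N}" then have l: "l < N" by simp
    show "(w' l - e) * (c - x l) \<le> (w' l - e) * ((hi - lo) / 2)"
      by (rule mult_left_mono[OF xc(2)[OF l]]) (use w'[OF l] in simp)
  qed
  have gen: "(\<Sum>l<N. (v l - e) * t) = (1 - N * e) * t" if "(\<Sum>l<N. v l) = 1" for v :: "nat \<Rightarrow> real" and t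
  proof -
    have "(\<Sum>l<N. (v l - e) * t) = (\<Sum>l<N. (v l - e)) * t" by (simp only: sum_distrib_right)
    also have "(\<Sum>l<N. (v l - e)) = 1 - N * e" using that by (simp add: sum_subtractf)
    finally show ?thesis .
  qed
  note s1 = gen[OF sw, of "(hi - lo) / 2"]
  note s2 = gen[OF sw', of "(hi - lo) / 2"]
  show ?thesis using id b1 b2 s1 s2 by simp
qed

lemma all_pos:
  assumes N: "0 < N" and st: "stochastic_matrix N Q" and irr: "irreducible_chain N Q"
    and ap: "aperiodic_chain N Q"
  shows "\<exists>K. \<forall>i<N. \<forall>j<N. 0 < mstep N Q K i j"
proof -
  have "\<forall>i. \<exists>K. i < N \<longrightarrow> (\<forall>k\<ge>K. 0 < mstep N Q k i i)"
  proof
    fix i show "\<exists>K. i < N \<longrightarrow> (\<forall>k\<ge>K. 0 < mstep N Q k i i)"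
    proof (cases "i < N")
      case True
      define S where "S = {k. 0 < k \<and> 0 < mstep N Q k i i}"
      have "\<exists>K. \<forall>k\<ge>K. k \<in> S"
      proof (rule numerical_semigroup)
        show "\<And>x. x \<in> S \<Longrightarrow> 0 < x" unfolding S_def by auto
        show "x + y \<in> S" if "x \<in> S" "y \<in> S" for x y
        proof -
          have "mstep N Q x i i * mstep N Q y i i \<le> mstep N Q (x + y) i i"
            by (rule mstep_ge_term[OF st True True])
          moreover have "0 < mstep N Q x i i * mstep N Q y i i" using that unfolding S_def by auto
          ultimately have "0 < mstep N Q (x + y) i i" by linarith
          then show ?thesis using that unfolding S_def by auto
        qed
        show "Gcd S = 1" using ap True unfolding aperiodic_chain_def S_def by auto
      qed
      then show ?thesis unfolding S_def by auto
    qed auto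
  qed
  then obtain Kf where Kf: "\<And>i k. i < N \<Longrightarrow> Kf i \<le> k \<Longrightarrow> 0 < mstep N Q k i i"
    by (metis choice)
  have "\<forall>i. \<forall>j. \<exists>k. i < N \<longrightarrow> j < N \<longrightarrow> 0 < mstep N Q k i j"
    using irr unfolding irreducible_chain_def by blast
  then obtain kk where kk: "\<And>i j. i < N \<Longrightarrow> j < N \<Longrightarrow> 0 < mstep N Q (kk i j) i j"
    by metis
  define K where "K = (\<Sum>i<N. Kf i) + (\<Sum>i<N. \<Sum>j<N. kk i j)"
  show ?thesis
  proof (intro exI allI impI)
    fix i j assume i: "i < N" and j: "j < N"
    have a1: "Kf i \<le> (\<Sum>i<N. Kf i)" using i by (intro member_le_sum) auto
    have a2: "kk i j \<le> (\<Sum>j<N. kk i j)" using j by (intro member_le_sum) auto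
    have a3: "(\<Sum>j<N. kk i j) \<le> (\<Sum>i<N. \<Sum>j<N. kk i j)" using i
      by (intro member_le_sum[of i "{..<N}" "\<lambda>i. \<Sum>j<N. kk i j"]) auto
    have KK: "K = (K - kk i j) + kk i j" and Kf_le: "Kf i \<le> K - kk i j"
      using a1 a2 a3 unfolding K_def by linarith+
    have "mstep N Q (K - kk i j) i i * mstep N Q (kk i j) i j \<le> mstep N Q (K - kk i j + kk i j) i j"
      by (rule mstep_ge_term[OF st j i])
    moreover have "0 < mstep N Q (K - kk i j) i i * mstep N Q (kk i j) i j"
      using Kf[OF i Kf_le] kk[OF i j] by simp
    ultimately show "0 < mstep N Q K i j" using KK by simp
  qed
qed

lemma convex_bounds:
  fixes w x :: "nat \<Rightarrow> real"
  assumes w: "\<And>l. l < N \<Longrightarrow> 0 \<le> w l" and sw: "(\<Sum>l<N. w l) = 1"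
    and x: "\<And>l. l < N \<Longrightarrow> lo \<le> x l \<and> x l \<le> hi"
  shows "lo \<le> (\<Sum>l<N. w l * x l) \<and> (\<Sum>l<N. w l * x l) \<le> hi"
proof
  have "lo = (\<Sum>l<N. w l * lo)" using sw by (simp add: sum_distrib_right[symmetric])
  also have "\<dots> \<le> (\<Sum>l<N. w l * x l)" by (rule sum_mono) (use w x in \<open>auto intro: mult_left_mono\<close>)
  finally show "lo \<le> (\<Sum>l<N. w l * x l)" .
  have "(\<Sum>l<N. w l * x l) \<le> (\<Sum>l<N. w l * hi)" by (rule sum_mono) (use w x in \<open>auto intro: mult_left_mono\<close>)
  also have "\<dots> = hi" using sw by (simp add: sum_distrib_right[symmetric])
  finally show "(\<Sum>l<N. w l * x l) \<le> hi" .
qed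

lemma markov_conv:
  assumes N: "0 < N" and st: "stochastic_matrix N Q" and irr: "irreducible_chain N Q"
    and ap: "aperiodic_chain N Q" and i0: "i0 < N" and j: "j < N"
  shows "convergent (\<lambda>k. mstep N Q k i0 j)"
proof -
  obtain K where K: "\<And>a b. a < N \<Longrightarrow> b < N \<Longrightarrow> 0 < mstep N Q K a b" using all_pos[OF N st irr ap] by blast
  define X where "X k l = mstep N Q k l j" for k l
  define hi where "hi k = Max ((X k) ` {..<N})" for k
  define lo where "lo k = Min ((X k) ` {..<N})" for k
  have ne: "(X k) ` {..<N} \<noteq> {}" for k using N by auto
  have bnd: "lo k \<le> X k l \<and> X k l \<le> hi k" if "l < N" for k l
    unfolding hi_def lo_def using that by (auto intro: Min_le Max_ge)
  have athi: "\<exists>l<N. X k l = hi k" for k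
    using Max_in[OF _ ne[of k]] unfolding hi_def by auto
  have atlo: "\<exists>l<N. X k l = lo k" for k
    using Min_in[OF _ ne[of k]] unfolding lo_def by auto
  have shift: "X (t + k) i = (\<Sum>l<N. mstep N Q t i l * X k l)" for t k i
    unfolding X_def by (rule mstep_CK[OF j])
  have wnn: "\<And>l. l < N \<Longrightarrow> 0 \<le> mstep N Q t i l" for t i using mstep_nonneg[OF st] by blast
  have wsum: "i < N \<Longrightarrow> (\<Sum>l<N. mstep N Q t i l) = 1" for t i using mstep_rowsum[OF st] by blast
  have conv: "lo k \<le> X (t + k) i \<and> X (t + k) i \<le> hi k" if i: "i < N" for t k i
    unfolding shift by (rule convex_bounds[OF wnn wsum[OF i] bnd])
  have hi_mono: "hi (t + k) \<le> hi k" for t k using athi[of "t + k"] conv by metis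
  have lo_mono: "lo k \<le> lo (t + k)" for t k using atlo[of "t + k"] conv by metis
  define e where "e = Min ((\<lambda>(a,b). mstep N Q K a b) ` ({..<N} \<times> {..<N}))"
  have e_le: "e \<le> mstep N Q K a b" if "a < N" "b < N" for a b
    unfolding e_def using that by (intro Min_le) auto
  have e_pos: "0 < e"
  proof -
    have "e \<in> (\<lambda>(a,b). mstep N Q K a b) ` ({..<N} \<times> {..<N})"
      unfolding e_def using N by (intro Min_in) auto
    then show ?thesis using K by auto
  qed
  have Ne: "N * e \<le> 1"
  proof -
    have "(\<Sum>l<N. e) \<le> (\<Sum>l<N. mstep N Q K 0 l)" using e_le N by (intro sum_mono) auto
    then show ?thesis using wsum[of 0 K] N by simp
  qed
  define \<rho> where "\<rho> = 1 - N * e"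
  have rho: "0 \<le> \<rho>" "\<rho> < 1" unfolding \<rho>_def using Ne e_pos N by auto
  define D where "D k = hi k - lo k" for k
  have D0: "0 \<le> D k" for k unfolding D_def using bnd[of 0 k] N by force
  have Dmono: "D (Suc k) \<le> D k" for k using hi_mono[of 1 k] lo_mono[of k 1] unfolding D_def by simp
  have Dcontr: "D (k + K) \<le> \<rho> * D k" for k
  proof -
    obtain a where a: "a < N" "X (K + k) a = hi (K + k)" using athi by blast
    obtain b where b: "b < N" "X (K + k) b = lo (K + k)" using atlo by blast
    have "X (K + k) a - X (K + k) b \<le> \<rho> * D k" unfolding shift \<rho>_def D_def
      by (rule doeblin_ineq[OF e_le[OF a(1)] e_le[OF b(1)] wsum[OF a(1)] wsum[OF b(1)] bnd])
    then show ?thesis using a b unfolding D_def by (simp add: add.commute)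
  qed
  have "decseq D" using Dmono by (simp add: decseq_SucI)
  then obtain L where L: "D \<longlonglongrightarrow> L" "\<forall>i. L \<le> D i" using decseq_convergent[of D 0] D0 by blast
  have "L \<le> \<rho> * L"
  proof (rule LIMSEQ_le[OF LIMSEQ_ignore_initial_segment[OF L(1), of K]])
    show "(\<lambda>k. \<rho> * D k) \<longlonglongrightarrow> \<rho> * L" by (intro tendsto_mult_left L(1))
    show "\<exists>N. \<forall>n\<ge>N. D (n + K) \<le> \<rho> * D n" using Dcontr by blast
  qed
  moreover have "0 \<le> L" using L(1) D0 by (intro LIMSEQ_le_const[OF L(1)]) auto
  ultimately have L0: "L = 0" using rho by (smt (verit) mult_le_cancel_right1)
  have "incseq lo" using lo_mono[of _ 1] by (simp add: incseq_SucI)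
  moreover have "\<forall>k. lo k \<le> hi 0" using bnd N hi_mono[of _ 0] by (smt (verit) add.right_neutral)
  ultimately obtain lam where lam: "lo \<longlonglongrightarrow> lam" using incseq_convergent by blast
  have "(\<lambda>k. X k i0) \<longlonglongrightarrow> lam"
  proof (rule tendsto_sandwich[of lo _ _ "\<lambda>k. lo k + D k"])
    show "\<forall>\<^sub>F k in sequentially. lo k \<le> X k i0" using bnd[OF i0] by (intro always_eventually) auto
    show "\<forall>\<^sub>F k in sequentially. X k i0 \<le> lo k + D k" using bnd[OF i0] unfolding D_def
      by (intro always_eventually) auto
    show "(\<lambda>k. lo k + D k) \<longlonglongrightarrow> lam" using tendsto_add[OF lam L(1)] L0 by simp
  qed (rule lam)
  then show ?thesis unfolding X_def convergent_def by blast
qed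

lemma sum_split_mult:
  fixes f :: "nat \<Rightarrow> 'a::comm_monoid_add"
  shows "(\<Sum>x<n*d. f x) = (\<Sum>i<n. \<Sum>c<d. f (i*d + c))"
proof -
  have "(\<Sum>x<n*d. f x) = (\<Sum>i<n. sum f {i*d..<i*d+d})" by (rule sum.nat_group[symmetric])
  also have "\<dots> = (\<Sum>i<n. \<Sum>c<d. f (i*d + c))"
  proof (rule sum.cong[OF refl])
    fix i
    have "sum f {0 + i*d..<d + i*d} = (\<Sum>c\<in>{0..<d}. f (c + i*d))" by (rule sum.shift_bounds_nat_ivl)
    then show "sum f {i*d..<i*d+d} = (\<Sum>c<d. f (i*d + c))"
      by (simp add: atLeast0LessThan add.commute)
  qed
  finally show ?thesis .
qed

lemma idx_lt: "j < n \<Longrightarrow> a < (d::nat) \<Longrightarrow> j * d + a < n * d"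
proof -
  assume "j < n" "a < d"
  then have "j * d + a < j * d + d" by simp
  also have "\<dots> = Suc j * d" by simp
  also have "\<dots> \<le> n * d" using \<open>j < n\<close> by (intro mult_right_mono) auto
  finally show ?thesis .
qed

lemma idx_div: "a < (d::nat) \<Longrightarrow> (j * d + a) div d = j" by simp
lemma idx_mod: "a < (d::nat) \<Longrightarrow> (j * d + a) mod d = a" by simp

lemma block_mat_carrier: "block_mat n d1 d2 F \<in> carrier_mat (n*d1) (n*d2)"
  unfolding block_mat_def by simp

lemma block_mat_idx: assumes "j < n" "a < d1" "i < n" "c < d2"
  shows "block_mat n d1 d2 F $$ (j*d1 + a, i*d2 + c) = F j i $$ (a, c)"
  using assms idx_lt[of j n a d1] idx_lt[of i n c d2] unfolding block_mat_def by simp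

lemma block_mat_mult_vec:
  assumes j: "j < n" and a: "a < d1" and v: "v \<in> carrier_vec (n*d2)"
  shows "(block_mat n d1 d2 F *\<^sub>v v) $ (j*d1 + a) = (\<Sum>i<n. \<Sum>c<d2. F j i $$ (a,c) * v $ (i*d2 + c))"
proof -
  have "(block_mat n d1 d2 F *\<^sub>v v) $ (j*d1 + a) = (\<Sum>x<n*d2. block_mat n d1 d2 F $$ (j*d1 + a, x) * v $ x)"
    by (rule mult_mat_vec_index_sum[OF block_mat_carrier v idx_lt[OF j a]])
  also have "\<dots> = (\<Sum>i<n. \<Sum>c<d2. block_mat n d1 d2 F $$ (j*d1 + a, i*d2+c) * v $ (i*d2+c))"
    by (rule sum_split_mult)
  also have "\<dots> = (\<Sum>i<n. \<Sum>c<d2. F j i $$ (a,c) * v $ (i*d2 + c))"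
    by (intro sum.cong refl) (simp add: block_mat_idx[OF j a])
  finally show ?thesis .
qed

lemma block_vec_idx: assumes "j < n" "a < d" shows "block_vec n d F $ (j*d + a) = F j $ a"
  using assms idx_lt[of j n a d] unfolding block_vec_def by simp

lemma block_vec_carrier: "block_vec n d F \<in> carrier_vec (n*d)"
  unfolding block_vec_def by simp

lemma kron_carrier: "kron A B \<in> carrier_mat (dim_row A * dim_row B) (dim_col A * dim_col B)"
  unfolding kron_def by simp

lemma kron_idx: assumes "i < dim_row A * dim_row B" "j < dim_col A * dim_col B"
  shows "kron A B $$ (i,j) = A $$ (i div dim_row B, j div dim_col B) * B $$ (i mod dim_row B, j mod dim_col B)"
  using assms unfolding kron_def by simp

lemma perm3: "(\<Sum>a<n. \<Sum>i<Z. \<Sum>c<m. (F a i c :: real)) = (\<Sum>i<Z. \<Sum>c<m. \<Sum>a<n. F a i c)"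
proof -
  have "(\<Sum>a<n. \<Sum>i<Z. \<Sum>c<m. F a i c) = (\<Sum>i<Z. \<Sum>a<n. \<Sum>c<m. F a i c)" by (rule sum.swap)
  also have "\<dots> = (\<Sum>i<Z. \<Sum>c<m. \<Sum>a<n. F a i c)" by (rule sum.cong[OF refl], rule sum.swap)
  finally show ?thesis .
qed

lemma perm5: "(\<Sum>a2<n. \<Sum>a1<n. \<Sum>i<Z. \<Sum>d<m. \<Sum>c<m. (F a2 a1 i d c :: real)) =
   (\<Sum>i<Z. \<Sum>d<m. \<Sum>c<m. \<Sum>a1<n. \<Sum>a2<n. F a2 a1 i d c)"
proof -
  have "(\<Sum>a2<n. \<Sum>a1<n. \<Sum>i<Z. \<Sum>d<m. \<Sum>c<m. F a2 a1 i d c) = (\<Sum>a2<n. \<Sum>i<Z. \<Sum>a1<n. \<Sum>d<m. \<Sum>c<m. F a2 a1 i d c)"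
    by (rule sum.cong[OF refl], rule sum.swap)
  also have "\<dots> = (\<Sum>i<Z. \<Sum>a2<n. \<Sum>a1<n. \<Sum>d<m. \<Sum>c<m. F a2 a1 i d c)" by (rule sum.swap)
  also have "\<dots> = (\<Sum>i<Z. \<Sum>a2<n. \<Sum>d<m. \<Sum>a1<n. \<Sum>c<m. F a2 a1 i d c)"
    by (rule sum.cong[OF refl], rule sum.cong[OF refl], rule sum.swap)
  also have "\<dots> = (\<Sum>i<Z. \<Sum>a2<n. \<Sum>d<m. \<Sum>c<m. \<Sum>a1<n. F a2 a1 i d c)"
    by (rule sum.cong[OF refl], rule sum.cong[OF refl], rule sum.cong[OF refl], rule sum.swap)
  also have "\<dots> = (\<Sum>i<Z. \<Sum>d<m. \<Sum>a2<n. \<Sum>c<m. \<Sum>a1<n. F a2 a1 i d c)"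
    by (rule sum.cong[OF refl], rule sum.swap)
  also have "\<dots> = (\<Sum>i<Z. \<Sum>d<m. \<Sum>c<m. \<Sum>a2<n. \<Sum>a1<n. F a2 a1 i d c)"
    by (rule sum.cong[OF refl], rule sum.cong[OF refl], rule sum.swap)
  also have "\<dots> = (\<Sum>i<Z. \<Sum>d<m. \<Sum>c<m. \<Sum>a1<n. \<Sum>a2<n. F a2 a1 i d c)"
    by (rule sum.cong[OF refl], rule sum.cong[OF refl], rule sum.cong[OF refl], rule sum.swap)
  finally show ?thesis .
qed

lemma lin_step:
  fixes v p :: "nat \<Rightarrow> real" and h :: "nat \<Rightarrow> nat \<Rightarrow> nat \<Rightarrow> real" and y :: "nat \<Rightarrow> nat \<Rightarrow> real"
  shows "(\<Sum>a<n. v a * (\<Sum>i<Z. p i * (\<Sum>c<n. h i a c * y i c))) =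
         (\<Sum>i<Z. p i * (\<Sum>c<n. (\<Sum>a<n. v a * h i a c) * y i c))"
proof -
  have "(\<Sum>a<n. v a * (\<Sum>i<Z. p i * (\<Sum>c<n. h i a c * y i c))) =
        (\<Sum>a<n. \<Sum>i<Z. \<Sum>c<n. v a * (p i * (h i a c * y i c)))"
    by (simp only: sum_distrib_left)
  also have "\<dots> = (\<Sum>i<Z. \<Sum>c<n. \<Sum>a<n. v a * (p i * (h i a c * y i c)))" by (rule perm3)
  also have "\<dots> = (\<Sum>i<Z. p i * (\<Sum>c<n. (\<Sum>a<n. v a * h i a c) * y i c))"
    by (simp add: sum_distrib_left sum_distrib_right mult_ac)
  finally show ?thesis .
qed

lemma quad_step:
  fixes v p :: "nat \<Rightarrow> real" and h Y :: "nat \<Rightarrow> nat \<Rightarrow> nat \<Rightarrow> real"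
  shows "(\<Sum>a2<n. \<Sum>a1<n. v a1 * v a2 * (\<Sum>i<Z. p i * (\<Sum>d<n. \<Sum>c<n. h i a2 d * h i a1 c * Y i d c))) =
         (\<Sum>i<Z. p i * (\<Sum>d<n. \<Sum>c<n. (\<Sum>a<n. v a * h i a c) * (\<Sum>a<n. v a * h i a d) * Y i d c))"
proof -
  have "(\<Sum>a2<n. \<Sum>a1<n. v a1 * v a2 * (\<Sum>i<Z. p i * (\<Sum>d<n. \<Sum>c<n. h i a2 d * h i a1 c * Y i d c))) =
        (\<Sum>a2<n. \<Sum>a1<n. \<Sum>i<Z. \<Sum>d<n. \<Sum>c<n. v a1 * v a2 * (p i * (h i a2 d * h i a1 c * Y i d c)))"
    by (simp only: sum_distrib_left)
  also have "\<dots> = (\<Sum>i<Z. \<Sum>d<n. \<Sum>c<n. \<Sum>a1<n. \<Sum>a2<n. v a1 * v a2 * (p i * (h i a2 d * h i a1 c * Y i d c)))"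
    by (rule perm5)
  also have "\<dots> = (\<Sum>i<Z. p i * (\<Sum>d<n. \<Sum>c<n. (\<Sum>a<n. v a * h i a c) * (\<Sum>a<n. v a * h i a d) * Y i d c))"
    by (simp add: sum_distrib_left sum_distrib_right mult_ac)
  finally show ?thesis .
qed

lemma cs_weighted:
  fixes c a w b :: "nat \<Rightarrow> real"
  assumes c: "\<And>i. i < Z \<Longrightarrow> 0 \<le> c i" and w: "\<And>i. i < Z \<Longrightarrow> 0 \<le> w i"
    and b: "\<And>i. i < Z \<Longrightarrow> 0 \<le> b i" and ab: "\<And>i. i < Z \<Longrightarrow> (a i)\<^sup>2 \<le> w i * b i"
  shows "(\<Sum>i<Z. c i * a i)\<^sup>2 \<le> (\<Sum>i<Z. c i * w i) * (\<Sum>i<Z. c i * b i)"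
proof -
  define A where "A = (\<Sum>i<Z. c i * w i)"
  define B where "B = (\<Sum>i<Z. c i * a i)"
  define C where "C = (\<Sum>i<Z. c i * b i)"
  have A0: "0 \<le> A" unfolding A_def using c w by (auto intro!: sum_nonneg)
  have C0: "0 \<le> C" unfolding C_def using c b by (auto intro!: sum_nonneg)
  have pt: "0 \<le> w i * t\<^sup>2 + 2 * a i * t + b i" if i: "i < Z" for i t
  proof -
    have x0: "0 \<le> w i * t\<^sup>2 + b i" using w[OF i] b[OF i] by simp
    have "(2 * a i * t)\<^sup>2 = 4 * (a i)\<^sup>2 * t\<^sup>2" by (simp add: power_mult_distrib)
    also have "\<dots> \<le> 4 * (w i * b i) * t\<^sup>2" using ab[OF i] by (intro mult_right_mono mult_left_mono) auto
    also have "\<dots> \<le> (w i * t\<^sup>2 + b i)\<^sup>2"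
    proof -
      have "0 \<le> (w i * t\<^sup>2 - b i)\<^sup>2" by simp
      then show ?thesis by (simp add: power2_eq_square algebra_simps)
    qed
    finally have "\<bar>2 * a i * t\<bar>\<^sup>2 \<le> (w i * t\<^sup>2 + b i)\<^sup>2" by simp
    then have "\<bar>2 * a i * t\<bar> \<le> w i * t\<^sup>2 + b i" by (rule power2_le_imp_le[OF _ x0])
    then show ?thesis by linarith
  qed
  have all: "0 \<le> A * t\<^sup>2 + 2 * B * t + C" for t
  proof -
    have "0 \<le> (\<Sum>i<Z. c i * (w i * t\<^sup>2 + 2 * a i * t + b i))"
      using c pt by (auto intro!: sum_nonneg)
    also have "\<dots> = (\<Sum>i<Z. c i * w i * t\<^sup>2 + 2 * t * (c i * a i) + c i * b i)"
      by (rule sum.cong[OF refl]) (simp add: algebra_simps)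
    also have "\<dots> = (\<Sum>i<Z. c i * w i) * t\<^sup>2 + 2 * t * (\<Sum>i<Z. c i * a i) + (\<Sum>i<Z. c i * b i)"
      by (simp only: sum.distrib sum_distrib_left[symmetric] sum_distrib_right[symmetric])
    also have "\<dots> = A * t\<^sup>2 + 2 * B * t + C" unfolding A_def B_def C_def by simp
    finally show ?thesis .
  qed
  show ?thesis unfolding A_def[symmetric] B_def[symmetric] C_def[symmetric]
  proof (cases "A = 0")
    case True
    have "B = 0"
    proof (rule ccontr)
      assume B: "B \<noteq> 0"
      have "0 \<le> 2 * B * (- (C + 1) / (2 * B)) + C" using all[of "- (C + 1) / (2 * B)"] True by simp
      also have "\<dots> = -1" using B by (simp add: field_simps)
      finally show False by simp
    qed
    then show "B\<^sup>2 \<le> A * C" using True by simp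
  next
    case False
    then have Ap: "0 < A" using A0 by simp
    have "0 \<le> A * (- B / A)\<^sup>2 + 2 * B * (- B / A) + C" by (rule all)
    also have "\<dots> = C - B\<^sup>2 / A" using Ap by (simp add: power2_eq_square field_simps)
    finally have "B\<^sup>2 / A \<le> C" by simp
    then show "B\<^sup>2 \<le> A * C" using Ap by (simp add: field_simps)
  qed
qed

lemma pow_Suc_left: assumes A: "A \<in> carrier_mat n n"
  shows "A ^\<^sub>m Suc k = A * A ^\<^sub>m k"
proof (induction k)
  case 0 show ?case using A by simp
next
  case (Suc k)
  have "A ^\<^sub>m Suc (Suc k) = (A * A ^\<^sub>m k) * A" using Suc by simp
  also have "\<dots> = A * (A ^\<^sub>m k * A)" by (rule assoc_mult_mat[OF A pow_carrier_mat[OF A] A])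
  finally show ?case by simp
qed

lemma pow_Suc_left_vec: assumes A: "A \<in> carrier_mat n n" and v: "v \<in> carrier_vec n"
  shows "A ^\<^sub>m Suc k *\<^sub>v v = A *\<^sub>v (A ^\<^sub>m k *\<^sub>v v)"
  unfolding pow_Suc_left[OF A] by (rule assoc_mult_mat_vec[OF A pow_carrier_mat[OF A] v])

definition lin :: "nat \<Rightarrow> nat \<Rightarrow> (nat \<Rightarrow> real) \<Rightarrow> real vec \<Rightarrow> real" where
  "lin n i v y = (\<Sum>c<n. v c * y $ (i*n + c))"

definition quad :: "nat \<Rightarrow> nat \<Rightarrow> (nat \<Rightarrow> real) \<Rightarrow> real vec \<Rightarrow> real" where
  "quad n i v Y = (\<Sum>d<n. \<Sum>c<n. v c * v d * Y $ (i*(n*n) + (d*n + c)))"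

lemma E1:
  assumes Hf: "\<And>i. i < Z \<Longrightarrow> Hf i \<in> carrier_mat n n"
    and j: "j < Z" and a: "a < n" and y: "y \<in> carrier_vec (Z*n)"
  shows "(block_mat Z n n (\<lambda>j i. pp i j \<cdot>\<^sub>m Hf i) *\<^sub>v y) $ (j*n + a) =
    (\<Sum>i<Z. pp i j * (\<Sum>c<n. Hf i $$ (a,c) * y $ (i*n + c)))"
  unfolding block_mat_mult_vec[OF j a y]
proof (intro sum.cong refl)
  fix i assume i: "i \<in> {..<Z}"
  have "(\<Sum>c<n. (pp i j \<cdot>\<^sub>m Hf i) $$ (a, c) * y $ (i * n + c)) = (\<Sum>c<n. pp i j * (Hf i $$ (a,c) * y $ (i*n + c)))"
    using Hf[of i] i a by (intro sum.cong refl) auto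
  then show "(\<Sum>c<n. (pp i j \<cdot>\<^sub>m Hf i) $$ (a, c) * y $ (i * n + c)) = pp i j * (\<Sum>c<n. Hf i $$ (a, c) * y $ (i * n + c))"
    by (simp add: sum_distrib_left)
qed

lemma kron_sq_idx:
  assumes H: "H \<in> carrier_mat n n" and a1: "a1 < n" and a2: "a2 < n" and c: "c < n" and d: "d < n"
  shows "kron H H $$ (a2*n + a1, d*n + c) = H $$ (a2, d) * H $$ (a1, c)"
proof -
  have "a2*n + a1 < n*n" "d*n + c < n*n" using idx_lt a1 a2 c d by auto
  then show ?thesis using H a1 c by (simp add: kron_idx)
qed

lemma E2:
  assumes Hf: "\<And>i. i < Z \<Longrightarrow> Hf i \<in> carrier_mat n n"
    and j: "j < Z" and a1: "a1 < n" and a2: "a2 < n" and Y: "Y \<in> carrier_vec (Z*(n*n))"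
  shows "(block_mat Z (n*n) (n*n) (\<lambda>j i. pp i j \<cdot>\<^sub>m kron (Hf i) (Hf i)) *\<^sub>v Y) $ (j*(n*n) + (a2*n + a1)) =
    (\<Sum>i<Z. pp i j * (\<Sum>d<n. \<Sum>c<n. Hf i $$ (a2,d) * Hf i $$ (a1,c) * Y $ (i*(n*n) + (d*n + c))))"
proof -
  have a: "a2*n + a1 < n*n" using idx_lt a1 a2 by auto
  show ?thesis
    unfolding block_mat_mult_vec[OF j a Y]
  proof (intro sum.cong refl)
    fix i assume i: "i \<in> {..<Z}"
    have H: "Hf i \<in> carrier_mat n n" using Hf i by simp
    have kc: "kron (Hf i) (Hf i) \<in> carrier_mat (n*n) (n*n)" using kron_carrier[of "Hf i" "Hf i"] H by simp
    have "(\<Sum>col<n*n. (pp i j \<cdot>\<^sub>m kron (Hf i) (Hf i)) $$ (a2*n + a1, col) * Y $ (i*(n*n) + col)) =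
          (\<Sum>d<n. \<Sum>c<n. (pp i j \<cdot>\<^sub>m kron (Hf i) (Hf i)) $$ (a2*n + a1, d*n+c) * Y $ (i*(n*n) + (d*n+c)))"
      by (rule sum_split_mult)
    also have "\<dots> = (\<Sum>d<n. \<Sum>c<n. pp i j * (Hf i $$ (a2,d) * Hf i $$ (a1,c) * Y $ (i*(n*n) + (d*n + c))))"
    proof (intro sum.cong refl)
      fix d c assume d: "d \<in> {..<n}" and c: "c \<in> {..<n}"
      have dc: "d*n + c < n*n" using idx_lt d c by auto
      show "(pp i j \<cdot>\<^sub>m kron (Hf i) (Hf i)) $$ (a2*n + a1, d*n+c) * Y $ (i*(n*n) + (d*n+c)) =
            pp i j * (Hf i $$ (a2,d) * Hf i $$ (a1,c) * Y $ (i*(n*n) + (d*n + c)))"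
        using kc a dc kron_sq_idx[OF H a1 a2] c d by simp
    qed
    also have "\<dots> = pp i j * (\<Sum>d<n. \<Sum>c<n. Hf i $$ (a2,d) * Hf i $$ (a1,c) * Y $ (i*(n*n) + (d*n + c)))"
      by (simp add: sum_distrib_left)
    finally show "(\<Sum>col<n*n. (pp i j \<cdot>\<^sub>m kron (Hf i) (Hf i)) $$ (a2*n + a1, col) * Y $ (i*(n*n) + col)) =
          pp i j * (\<Sum>d<n. \<Sum>c<n. Hf i $$ (a2,d) * Hf i $$ (a1,c) * Y $ (i*(n*n) + (d*n + c)))" .
  qed
qed

lemma lin_unit: fixes a n :: nat assumes a: "a < n"
  shows "lin n j (\<lambda>c. if c = a then 1 else 0) x = x $ (j*n + a)"
proof -
  have "lin n j (\<lambda>c. if c = a then 1 else 0) x = (\<Sum>c<n. if c = a then x $ (j*n + c) else 0)"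
    unfolding lin_def by (intro sum.cong refl) auto
  then show ?thesis using a by simp
qed

lemma delta_mult: fixes a n :: nat assumes a: "a < n"
  shows "(\<Sum>c<n. (if c = a then 1 else 0) * (f c :: real)) = f a"
proof -
  have "(\<Sum>c<n. (if c = a then 1 else 0) * f c) = (\<Sum>c<n. if c = a then f c else 0)"
    by (intro sum.cong refl) auto
  also have "\<dots> = f a" using a by (subst sum.delta) auto
  finally show ?thesis .
qed

lemma quad_unit: assumes a: "a < n"
  shows "quad n j (\<lambda>c. if c = a then 1 else 0) X = X $ (j*(n*n) + (a*n + a))"
proof -
  have "quad n j (\<lambda>c. if c = a then 1 else 0) X =
     (\<Sum>d<n. (if d = a then 1 else 0) * (\<Sum>c<n. (if c = a then 1 else 0) * X $ (j*(n*n) + (d*n + c))))"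
    unfolding quad_def by (simp add: sum_distrib_left mult_ac)
  also have "\<dots> = (\<Sum>d<n. (if d = a then 1 else 0) * X $ (j*(n*n) + (d*n + a)))"
    by (intro sum.cong refl) (simp add: delta_mult[OF a])
  also have "\<dots> = X $ (j*(n*n) + (a*n + a))" by (rule delta_mult[OF a])
  finally show ?thesis .
qed

lemma quad_sq: assumes "\<And>d c. d < n \<Longrightarrow> c < n \<Longrightarrow> X $ (j*(n*n) + (d*n + c)) = y $ (j*n + c) * y $ (j*n + d)"
  shows "quad n j v X = (lin n j v y)\<^sup>2"
proof -
  have "quad n j v X = (\<Sum>d<n. \<Sum>c<n. (v c * y $ (j*n + c)) * (v d * y $ (j*n + d)))"
    unfolding quad_def using assms by (intro sum.cong refl) (simp add: mult_ac)
  also have "\<dots> = (\<Sum>c<n. \<Sum>d<n. (v c * y $ (j*n + c)) * (v d * y $ (j*n + d)))" by (rule sum.swap)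
  also have "\<dots> = (lin n j v y) * (lin n j v y)" unfolding lin_def by (rule sum_product[symmetric])
  finally show ?thesis by (simp add: power2_eq_square)
qed

lemma H11_null:
  fixes Hf :: "nat \<Rightarrow> real mat" and pp :: "nat \<Rightarrow> nat \<Rightarrow> real"
  assumes Hf: "\<And>i. i < Z \<Longrightarrow> Hf i \<in> carrier_mat n n"
    and pnn: "\<And>i j. i < Z \<Longrightarrow> j < Z \<Longrightarrow> 0 \<le> pp i j"
    and prs: "\<And>i. i < Z \<Longrightarrow> (\<Sum>j<Z. pp i j) = 1"
    and null2: "pow_null (block_mat Z (n*n) (n*n) (\<lambda>j i. pp i j \<cdot>\<^sub>m kron (Hf i) (Hf i))) (Z*(n*n))"
  shows "pow_null (block_mat Z n n (\<lambda>j i. pp i j \<cdot>\<^sub>m Hf i)) (Z*n)"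
proof -
  define A1 where "A1 = block_mat Z n n (\<lambda>j i. pp i j \<cdot>\<^sub>m Hf i)"
  define A2 where "A2 = block_mat Z (n*n) (n*n) (\<lambda>j i. pp i j \<cdot>\<^sub>m kron (Hf i) (Hf i))"
  have A1: "A1 \<in> carrier_mat (Z*n) (Z*n)" unfolding A1_def by (rule block_mat_carrier)
  have A2: "A2 \<in> carrier_mat (Z*(n*n)) (Z*(n*n))" unfolding A2_def by (rule block_mat_carrier)
  define u where "u v i c = (\<Sum>a<n. v a * Hf i $$ (a,c))" for v i c
  have S1: "lin n j v (A1 *\<^sub>v y) = (\<Sum>i<Z. pp i j * lin n i (u v i) y)"
    if j: "j < Z" and y: "y \<in> carrier_vec (Z*n)" for j v y
  proof -
    have "lin n j v (A1 *\<^sub>v y) = (\<Sum>a<n. v a * (\<Sum>i<Z. pp i j * (\<Sum>c<n. Hf i $$ (a,c) * y $ (i*n + c))))"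
      unfolding lin_def A1_def by (intro sum.cong refl) (simp add: E1[OF Hf j _ y])
    also have "\<dots> = (\<Sum>i<Z. pp i j * (\<Sum>c<n. (\<Sum>a<n. v a * Hf i $$ (a,c)) * y $ (i*n + c)))"
      by (rule lin_step[where h = "\<lambda>i a c. Hf i $$ (a,c)" and y = "\<lambda>i c. y $ (i*n+c)"])
    also have "\<dots> = (\<Sum>i<Z. pp i j * lin n i (u v i) y)" unfolding lin_def u_def ..
    finally show ?thesis .
  qed
  have S2: "quad n j v (A2 *\<^sub>v Y) = (\<Sum>i<Z. pp i j * quad n i (u v i) Y)"
    if j: "j < Z" and Y: "Y \<in> carrier_vec (Z*(n*n))" for j v Y
  proof -
    have "quad n j v (A2 *\<^sub>v Y) = (\<Sum>a2<n. \<Sum>a1<n. v a1 * v a2 * (\<Sum>i<Z. pp i j *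
             (\<Sum>d<n. \<Sum>c<n. Hf i $$ (a2,d) * Hf i $$ (a1,c) * Y $ (i*(n*n) + (d*n + c)))))"
      unfolding quad_def A2_def by (intro sum.cong refl) (simp add: E2[OF Hf j _ _ Y])
    also have "\<dots> = (\<Sum>i<Z. pp i j * (\<Sum>d<n. \<Sum>c<n. (\<Sum>a<n. v a * Hf i $$ (a,c)) * (\<Sum>a<n. v a * Hf i $$ (a,d)) * Y $ (i*(n*n) + (d*n + c))))"
      by (rule quad_step[where h = "\<lambda>i a c. Hf i $$ (a,c)" and Y = "\<lambda>i d c. Y $ (i*(n*n) + (d*n + c))"])
    also have "\<dots> = (\<Sum>i<Z. pp i j * quad n i (u v i) Y)" unfolding quad_def u_def ..
    finally show ?thesis .
  qed
  show ?thesis unfolding A1_def[symmetric]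
  proof (rule pow_nullI[OF A1])
    fix y :: "real vec" and r assume y: "y \<in> carrier_vec (Z*n)" and r: "r < Z*n"
    define Y0 where "Y0 = vec (Z*(n*n)) (\<lambda>r. y $ ((r div (n*n))*n + (r mod (n*n)) mod n) * y $ ((r div (n*n))*n + (r mod (n*n)) div n))"
    have Y0: "Y0 \<in> carrier_vec (Z*(n*n))" unfolding Y0_def by simp
    define w :: "nat \<Rightarrow> nat \<Rightarrow> real" where "w = rec_nat (\<lambda>j. 1) (\<lambda>k wk j. \<Sum>i<Z. pp i j * wk i)"
    have w0: "w 0 j = 1" for j unfolding w_def by simp
    have wS: "w (Suc k) j = (\<Sum>i<Z. pp i j * w k i)" for k j unfolding w_def by simp
        have wnn: "0 \<le> w k j" if "j < Z" for k j
      using that by (induction k arbitrary: j) (auto simp: w0 wS pnn intro!: sum_nonneg mult_nonneg_nonneg)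
    have wsum: "(\<Sum>j<Z. w k j) = Z" for k
    proof (induction k)
      case 0 then show ?case by (simp add: w0)
    next
      case (Suc k)
      have "(\<Sum>j<Z. w (Suc k) j) = (\<Sum>j<Z. \<Sum>i<Z. pp i j * w k i)" by (simp add: wS)
      also have "\<dots> = (\<Sum>i<Z. \<Sum>j<Z. pp i j * w k i)" by (rule sum.swap)
      also have "\<dots> = (\<Sum>i<Z. w k i * (\<Sum>j<Z. pp i j))" by (simp add: sum_distrib_left mult.commute)
      also have "\<dots> = (\<Sum>i<Z. w k i)" by (intro sum.cong refl) (simp add: prs)
      finally show ?case using Suc by simp
    qed
    have wle: "w k j \<le> Z" if j: "j < Z" for k j
    proof -
      have "w k j \<le> (\<Sum>j<Z. w k j)" using j wnn by (intro member_le_sum) auto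
      then show ?thesis using wsum by simp
    qed
    define yk where "yk k = A1 ^\<^sub>m k *\<^sub>v y" for k
    define Yk where "Yk k = A2 ^\<^sub>m k *\<^sub>v Y0" for k
    have yk: "yk k \<in> carrier_vec (Z*n)" for k unfolding yk_def by (rule mult_mat_vec_carrier[OF pow_carrier_mat[OF A1] y])
    have Yk: "Yk k \<in> carrier_vec (Z*(n*n))" for k unfolding Yk_def by (rule mult_mat_vec_carrier[OF pow_carrier_mat[OF A2] Y0])
    have Inv: "\<forall>j<Z. \<forall>v. 0 \<le> quad n j v (Yk k) \<and> (lin n j v (yk k))\<^sup>2 \<le> w k j * quad n j v (Yk k)" for k
    proof (induction k)
      case 0
      show ?case
      proof (intro allI impI)
        fix j v assume j: "j < Z"
        have "quad n j v (Yk 0) = (lin n j v (yk 0))\<^sup>2"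
        proof (rule quad_sq)
          fix d c assume d: "d < n" and c: "c < n"
          have dc: "d*n + c < n*n" using idx_lt d c by auto
          have lt: "j*(n*n) + (d*n + c) < Z*(n*n)" using idx_lt[OF j dc] .
          have "(j*(n*n) + (d*n + c)) div (n*n) = j" "(j*(n*n) + (d*n + c)) mod (n*n) = d*n + c"
            using idx_div[OF dc] idx_mod[OF dc] by auto
          moreover have "(d*n + c) mod n = c" "(d*n + c) div n = d" using c by auto
          ultimately show "Yk 0 $ (j*(n*n) + (d*n + c)) = yk 0 $ (j*n + c) * yk 0 $ (j*n + d)"
            unfolding Yk_def yk_def Y0_def using A1 A2 y lt by simp
        qed
        then show "0 \<le> quad n j v (Yk 0) \<and> (lin n j v (yk 0))\<^sup>2 \<le> w 0 j * quad n j v (Yk 0)"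
          by (simp add: w0)
      qed
    next
      case (Suc k)
      show ?case
      proof (intro allI impI)
        fix j v assume j: "j < Z"
        have y1: "yk (Suc k) = A1 *\<^sub>v yk k" unfolding yk_def by (rule pow_Suc_left_vec[OF A1 y])
        have Y1: "Yk (Suc k) = A2 *\<^sub>v Yk k" unfolding Yk_def by (rule pow_Suc_left_vec[OF A2 Y0])
        have L: "lin n j v (yk (Suc k)) = (\<Sum>i<Z. pp i j * lin n i (u v i) (yk k))"
          unfolding y1 by (rule S1[OF j yk])
        have Q: "quad n j v (Yk (Suc k)) = (\<Sum>i<Z. pp i j * quad n i (u v i) (Yk k))"
          unfolding Y1 by (rule S2[OF j Yk])
        have q0: "0 \<le> quad n j v (Yk (Suc k))" unfolding Q
          using Suc pnn j by (auto intro!: sum_nonneg mult_nonneg_nonneg)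
        have "(lin n j v (yk (Suc k)))\<^sup>2 \<le> (\<Sum>i<Z. pp i j * w k i) * (\<Sum>i<Z. pp i j * quad n i (u v i) (Yk k))"
          unfolding L by (rule cs_weighted) (use pnn j wnn Suc in auto)
        then show "0 \<le> quad n j v (Yk (Suc k)) \<and> (lin n j v (yk (Suc k)))\<^sup>2 \<le> w (Suc k) j * quad n j v (Yk (Suc k))"
          using q0 unfolding Q wS by simp
      qed
    qed
    define j where "j = r div n"
    define a where "a = r mod n"
    have n0: "0 < n" using r by (cases n) auto
    have j: "j < Z" unfolding j_def using r by (simp add: less_mult_imp_div_less)
    have a: "a < n" unfolding a_def using n0 by simp
    have rja: "r = j*n + a" unfolding j_def a_def by simp
    have aa: "a*n + a < n*n" using idx_lt[OF a a] .
    define idx where "idx = j*(n*n) + (a*n + a)"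
    have idx: "idx < Z*(n*n)" unfolding idx_def using idx_lt[OF j aa] .
    have bnd: "(yk k $ r)\<^sup>2 \<le> Z * \<bar>Yk k $ idx\<bar>" for k
    proof -
      have "(lin n j (\<lambda>c. if c = a then 1 else 0) (yk k))\<^sup>2 \<le> w k j * quad n j (\<lambda>c. if c = a then 1 else 0) (Yk k)"
        and q0: "0 \<le> quad n j (\<lambda>c. if c = a then 1 else 0) (Yk k)" using Inv[of k] j by auto
      then have "(yk k $ r)\<^sup>2 \<le> w k j * Yk k $ idx" and "0 \<le> Yk k $ idx"
        unfolding lin_unit[OF a] quad_unit[OF a] rja idx_def by auto
      moreover have "w k j * Yk k $ idx \<le> Z * Yk k $ idx" using wle[OF j] \<open>0 \<le> Yk k $ idx\<close>
        by (intro mult_right_mono) auto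
      ultimately show ?thesis by simp
    qed
    have "(\<lambda>k. Yk k $ idx) \<longlonglongrightarrow> 0" unfolding Yk_def
      by (rule pow_null_vec[OF A2 _ Y0 idx]) (use null2 A2_def in simp)
    then have T: "(\<lambda>k. Z * \<bar>Yk k $ idx\<bar>) \<longlonglongrightarrow> 0"
      using tendsto_mult_right_zero tendsto_rabs_zero_iff by blast
    have "(\<lambda>k. (yk k $ r)\<^sup>2) \<longlonglongrightarrow> 0"
    proof (rule tendsto_sandwich[of "\<lambda>k. 0" _ _ "\<lambda>k. Z * \<bar>Yk k $ idx\<bar>"])
      show "\<forall>\<^sub>F k in sequentially. 0 \<le> (yk k $ r)\<^sup>2" by simp
      show "\<forall>\<^sub>F k in sequentially. (yk k $ r)\<^sup>2 \<le> Z * \<bar>Yk k $ idx\<bar>" using bnd by (intro always_eventually) auto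
    qed (use T in auto)
    then have "(\<lambda>k. sqrt ((yk k $ r)\<^sup>2)) \<longlonglongrightarrow> sqrt 0" by (rule tendsto_real_sqrt)
    then have "(\<lambda>k. \<bar>yk k $ r\<bar>) \<longlonglongrightarrow> 0" by simp
    then show "(\<lambda>k. (A1 ^\<^sub>m k *\<^sub>v y) $ r) \<longlonglongrightarrow> 0" unfolding yk_def by (simp add: tendsto_rabs_zero_iff)
  qed
qed

definition dep :: "nat \<Rightarrow> ((nat \<Rightarrow> nat) \<Rightarrow> 'b) \<Rightarrow> bool" where
  "dep K f \<longleftrightarrow> (\<forall>\<omega> \<omega>'. (\<forall>t\<le>K. \<omega> t = \<omega>' t) \<longrightarrow> f \<omega> = f \<omega>')"

lemma paths_Suc: "paths N (Suc K) = (\<lambda>(y, g). g(Suc K := y)) ` ({0..<N} \<times> paths N K)"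
  unfolding paths_def by (simp add: atLeast0_atMost_Suc PiE_insert_eq)

lemma paths_Suc_inj: "inj_on (\<lambda>(y, g). g(Suc K := y)) ({0..<N} \<times> paths N K)"
  unfolding paths_def using inj_combinator[of "Suc K" "{0..K}" "\<lambda>_. {0..<N}"] by simp

lemma paths_0: "paths N 0 = (\<lambda>(y, g). g(0 := y)) ` ({0..<N} \<times> {\<lambda>x. undefined})"
proof -
  have "{0..(0::nat)} = insert 0 {}" by auto
  then show ?thesis unfolding paths_def by (simp add: PiE_insert_eq)
qed

lemma paths_val: "\<omega> \<in> paths N K \<Longrightarrow> t \<le> K \<Longrightarrow> \<omega> t < N"
  unfolding paths_def by (auto simp: PiE_iff)

lemma finite_paths: "finite (paths N K)"
  unfolding paths_def by (intro finite_PiE) auto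

lemma pexp_cong: "(\<And>\<omega>. \<omega> \<in> paths (nst S) K \<Longrightarrow> f \<omega> = g \<omega>) \<Longrightarrow> pexp S K f = pexp S K g"
  unfolding pexp_def by (intro sum.cong refl) auto

lemma pexp_sum: "pexp S K (\<lambda>\<omega>. \<Sum>i\<in>I. f i \<omega>) = (\<Sum>i\<in>I. pexp S K (f i))"
  unfolding pexp_def by (simp add: sum_distrib_left sum.swap[of _ I])

lemma pexp_scale: "pexp S K (\<lambda>\<omega>. c * f \<omega>) = c * pexp S K f"
  unfolding pexp_def by (simp add: sum_distrib_left mult_ac)

lemma pexp_add: "pexp S K (\<lambda>\<omega>. f \<omega> + g \<omega>) = pexp S K f + pexp S K g"
  unfolding pexp_def by (simp add: distrib_left sum.distrib)

lemma path_prob_upd: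
  assumes "\<omega> \<in> paths N K"
  shows "path_prob S (Suc K) (\<omega>(Suc K := y)) = path_prob S K \<omega> * P S (\<omega> K) y"
proof -
  have "(\<Prod>j<K. P S ((\<omega>(Suc K := y)) j) ((\<omega>(Suc K := y)) (Suc j))) = (\<Prod>j<K. P S (\<omega> j) (\<omega> (Suc j)))"
    by (intro prod.cong refl) auto
  then show ?thesis unfolding path_prob_def by (simp add: mult_ac)
qed

lemma pexp_Suc:
  assumes f: "dep K f"
  shows "pexp S (Suc K) (\<lambda>\<omega>. f \<omega> * g (\<omega> K) (\<omega> (Suc K))) =
         pexp S K (\<lambda>\<omega>. f \<omega> * (\<Sum>s<nst S. P S (\<omega> K) s * g (\<omega> K) s))"
proof -
  let ?N = "nst S"
  let ?F = "\<lambda>\<omega>. path_prob S (Suc K) \<omega> * (f \<omega> * g (\<omega> K) (\<omega> (Suc K)))"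
  have "pexp S (Suc K) (\<lambda>\<omega>. f \<omega> * g (\<omega> K) (\<omega> (Suc K))) = sum ?F (paths ?N (Suc K))"
    unfolding pexp_def ..
  also have "\<dots> = sum (?F \<circ> (\<lambda>(y, g). g(Suc K := y))) ({0..<?N} \<times> paths ?N K)"
    unfolding paths_Suc by (rule sum.reindex[OF paths_Suc_inj])
  also have "\<dots> = (\<Sum>(y,\<omega>)\<in>{0..<?N} \<times> paths ?N K. ?F (\<omega>(Suc K := y)))"
    by (rule sum.cong) (auto split: prod.splits)
  also have "\<dots> = (\<Sum>y\<in>{0..<?N}. \<Sum>\<omega>\<in>paths ?N K. ?F (\<omega>(Suc K := y)))"
    by (rule sum.cartesian_product[symmetric])
  also have "\<dots> = (\<Sum>\<omega>\<in>paths ?N K. \<Sum>y\<in>{0..<?N}. ?F (\<omega>(Suc K := y)))" by (rule sum.swap)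
  also have "\<dots> = (\<Sum>\<omega>\<in>paths ?N K. path_prob S K \<omega> * (f \<omega> * (\<Sum>s<?N. P S (\<omega> K) s * g (\<omega> K) s)))"
  proof (intro sum.cong refl)
    fix \<omega> assume w: "\<omega> \<in> paths ?N K"
    have fe: "f (\<omega>(Suc K := y)) = f \<omega>" for y using f unfolding dep_def by auto
    have "(\<Sum>y\<in>{0..<?N}. ?F (\<omega>(Suc K := y))) = (\<Sum>y<?N. path_prob S K \<omega> * (f \<omega> * (P S (\<omega> K) y * g (\<omega> K) y)))"
      by (intro sum.cong) (auto simp: path_prob_upd[OF w] fe mult_ac)
    also have "\<dots> = path_prob S K \<omega> * (f \<omega> * (\<Sum>s<?N. P S (\<omega> K) s * g (\<omega> K) s))"
      by (simp add: sum_distrib_left)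
    finally show "(\<Sum>y\<in>{0..<?N}. ?F (\<omega>(Suc K := y))) = path_prob S K \<omega> * (f \<omega> * (\<Sum>s<?N. P S (\<omega> K) s * g (\<omega> K) s))" .
  qed
  also have "\<dots> = pexp S K (\<lambda>\<omega>. f \<omega> * (\<Sum>s<nst S. P S (\<omega> K) s * g (\<omega> K) s))"
    unfolding pexp_def ..
  finally show ?thesis .
qed

lemma sum_times_singleton: "sum h (A \<times> {c}) = (\<Sum>s\<in>A. h (s, c))"
proof -
  have "A \<times> {c} = (\<lambda>s. (s, c)) ` A" by auto
  moreover have "inj_on (\<lambda>s. (s, c)) A" by (auto intro: inj_onI)
  ultimately show ?thesis by (simp add: sum.reindex)
qed

lemma pexp_0: "pexp S 0 f = (\<Sum>s<nst S. mu0 S s * f ((\<lambda>x. undefined)(0 := s)))"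
proof -
  let ?N = "nst S"
  have inj: "inj_on (\<lambda>(y, g). g(0 := y)) ({0..<?N} \<times> {\<lambda>x. undefined})"
    by (auto intro!: inj_onI dest: fun_cong[where x = 0])
  have "pexp S 0 f = sum (\<lambda>\<omega>. path_prob S 0 \<omega> * f \<omega>) ((\<lambda>(y, g). g(0 := y)) ` ({0..<?N} \<times> {\<lambda>x. undefined}))"
    unfolding pexp_def paths_0 ..
  also have "\<dots> = (\<Sum>s<?N. mu0 S s * f ((\<lambda>x. undefined)(0 := s)))"
    by (subst sum.reindex[OF inj]) (simp add: sum_times_singleton path_prob_def atLeast0LessThan)
  finally show ?thesis .
qed

lemma dep_const: "dep K (\<lambda>_. c)" unfolding dep_def by simp

lemma pexp_marg:
  assumes st: "stochastic_matrix (nst S) (P S)" and f: "dep K f"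
  shows "pexp S (Suc K) f = pexp S K f"
proof -
  have "pexp S (Suc K) f = pexp S (Suc K) (\<lambda>\<omega>. f \<omega> * (\<lambda>x y. 1) (\<omega> K) (\<omega> (Suc K)))" by simp
  also have "\<dots> = pexp S K (\<lambda>\<omega>. f \<omega> * (\<Sum>s<nst S. P S (\<omega> K) s * 1))" by (rule pexp_Suc[OF f])
  also have "\<dots> = pexp S K f"
  proof (rule pexp_cong)
    fix \<omega> assume "\<omega> \<in> paths (nst S) K"
    then have "\<omega> K < nst S" by (rule paths_val) simp
    then show "f \<omega> * (\<Sum>s<nst S. P S (\<omega> K) s * 1) = f \<omega>" using st unfolding stochastic_matrix_def by simp
  qed
  finally show ?thesis .
qed

lemma mu_formula:
  assumes st: "stochastic_matrix (nst S) (P S)" and s: "s < nst S"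
  shows "pexp S k (\<lambda>\<omega>. if \<omega> k = s then 1 else 0) = (\<Sum>l<nst S. mu0 S l * mstep (nst S) (P S) k l s)"
  using s
proof (induction k arbitrary: s)
  case 0
  show ?case unfolding pexp_0 by (intro sum.cong refl) auto
next
  case (Suc k)
  let ?N = "nst S"
  have "pexp S (Suc k) (\<lambda>\<omega>. if \<omega> (Suc k) = s then 1 else 0) =
        pexp S (Suc k) (\<lambda>\<omega>. (\<lambda>_. 1) \<omega> * (\<lambda>x y. if y = s then 1 else 0) (\<omega> k) (\<omega> (Suc k)))" by simp
  also have "\<dots> = pexp S k (\<lambda>\<omega>. 1 * (\<Sum>s'<?N. P S (\<omega> k) s' * (if s' = s then 1 else 0)))"
    by (rule pexp_Suc[OF dep_const])
  also have "\<dots> = pexp S k (\<lambda>\<omega>. \<Sum>l<?N. P S l s * (if \<omega> k = l then 1 else 0))"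
  proof (rule pexp_cong)
    fix \<omega> assume "\<omega> \<in> paths ?N k"
    then have wk: "\<omega> k < ?N" by (rule paths_val) simp
    have "(\<Sum>s'<?N. P S (\<omega> k) s' * (if s' = s then 1 else 0)) = P S (\<omega> k) s"
      using Suc.prems by (simp add: if_distrib cong: if_cong)
    moreover have "(\<Sum>l<?N. P S l s * (if \<omega> k = l then 1 else 0)) = P S (\<omega> k) s"
      using wk by (simp add: if_distrib cong: if_cong)
    ultimately show "1 * (\<Sum>s'<?N. P S (\<omega> k) s' * (if s' = s then 1 else 0)) = (\<Sum>l<?N. P S l s * (if \<omega> k = l then 1 else 0))"
      by simp
  qed
  also have "\<dots> = (\<Sum>l<?N. P S l s * pexp S k (\<lambda>\<omega>. if \<omega> k = l then 1 else 0))"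
    by (simp add: pexp_sum pexp_scale)
  also have "\<dots> = (\<Sum>l<?N. P S l s * (\<Sum>l0<?N. mu0 S l0 * mstep ?N (P S) k l0 l))"
    by (intro sum.cong refl) (simp add: Suc.IH)
  also have "\<dots> = (\<Sum>l<?N. \<Sum>l0<?N. mu0 S l0 * (mstep ?N (P S) k l0 l * P S l s))"
    by (simp add: sum_distrib_left mult_ac)
  also have "\<dots> = (\<Sum>l0<?N. \<Sum>l<?N. mu0 S l0 * (mstep ?N (P S) k l0 l * P S l s))" by (rule sum.swap)
  also have "\<dots> = (\<Sum>l0<?N. mu0 S l0 * mstep ?N (P S) (Suc k) l0 s)"
    by (simp add: sum_distrib_left)
  finally show ?case .
qed

lemma zidx_iff:
  assumes N: "0 < nst S" and x: "x < nst S" and s: "s < nst S"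
  shows "(zidx S x s = i) \<longleftrightarrow> (x = zfst S i \<and> s = zsnd S i)"
proof
  assume "zidx S x s = i"
  then show "x = zfst S i \<and> s = zsnd S i" unfolding zidx_def zfst_def zsnd_def using s by auto
next
  assume "x = zfst S i \<and> s = zsnd S i"
  then show "zidx S x s = i" unfolding zidx_def zfst_def zsnd_def by simp
qed

lemma zfst_lt: "i < nz S \<Longrightarrow> zfst S i < nst S"
  unfolding nz_def zfst_def by (simp add: less_mult_imp_div_less)

lemma zsnd_lt: "0 < nst S \<Longrightarrow> zsnd S i < nst S"
  unfolding zsnd_def by simp

lemma pk_formula:
  assumes N: "0 < nst S" and i: "i < nz S"
  shows "pk S k i = pexp S k (\<lambda>\<omega>. if \<omega> k = zfst S i then 1 else 0) * P S (zfst S i) (zsnd S i)"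
proof -
  let ?N = "nst S"
  have "pk S k i = pexp S (Suc k) (\<lambda>\<omega>. (\<lambda>_. 1) \<omega> * (\<lambda>x y. if zidx S x y = i then 1 else 0) (\<omega> k) (\<omega> (Suc k)))"
    unfolding pk_def zind_def by simp
  also have "\<dots> = pexp S k (\<lambda>\<omega>. 1 * (\<Sum>s<?N. P S (\<omega> k) s * (if zidx S (\<omega> k) s = i then 1 else 0)))"
    by (rule pexp_Suc[OF dep_const])
  also have "\<dots> = pexp S k (\<lambda>\<omega>. P S (zfst S i) (zsnd S i) * (if \<omega> k = zfst S i then 1 else 0))"
  proof (rule pexp_cong)
    fix \<omega> assume "\<omega> \<in> paths ?N k"
    then have wk: "\<omega> k < ?N" by (rule paths_val) simp
    have "(\<Sum>s<?N. P S (\<omega> k) s * (if zidx S (\<omega> k) s = i then 1 else 0)) =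
          (\<Sum>s<?N. if s = zsnd S i then (if \<omega> k = zfst S i then P S (\<omega> k) s else 0) else 0)"
      by (intro sum.cong refl) (auto simp: zidx_iff[OF N wk])
    also have "\<dots> = (if \<omega> k = zfst S i then P S (\<omega> k) (zsnd S i) else 0)"
      using zsnd_lt[OF N, of i] by simp
    finally show "1 * (\<Sum>s<?N. P S (\<omega> k) s * (if zidx S (\<omega> k) s = i then 1 else 0)) =
          P S (zfst S i) (zsnd S i) * (if \<omega> k = zfst S i then 1 else 0)" by simp
  qed
  also have "\<dots> = P S (zfst S i) (zsnd S i) * pexp S k (\<lambda>\<omega>. if \<omega> k = zfst S i then 1 else 0)"
    by (rule pexp_scale)
  finally show ?thesis by simp
qed

lemma pk_tendsto:
  assumes N: "0 < nst S" and st: "stochastic_matrix (nst S) (P S)" and irr: "irreducible_chain (nst S) (P S)"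
    and ap: "aperiodic_chain (nst S) (P S)" and i: "i < nz S"
  shows "(\<lambda>k. pk S k i) \<longlonglongrightarrow> pinf S i"
proof -
  let ?N = "nst S"
  let ?s = "zfst S i"
  have s: "?s < ?N" by (rule zfst_lt[OF i])
  have "\<forall>l. \<exists>L. l < ?N \<longrightarrow> (\<lambda>k. mstep ?N (P S) k l ?s) \<longlonglongrightarrow> L"
    using markov_conv[OF N st irr ap _ s] unfolding convergent_def by blast
  then obtain L where L: "\<And>l. l < ?N \<Longrightarrow> (\<lambda>k. mstep ?N (P S) k l ?s) \<longlonglongrightarrow> L l" by metis
  have "(\<lambda>k. (\<Sum>l<?N. mu0 S l * mstep ?N (P S) k l ?s) * P S ?s (zsnd S i)) \<longlonglongrightarrow>
        (\<Sum>l<?N. mu0 S l * L l) * P S ?s (zsnd S i)"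
    using L by (intro tendsto_mult_right tendsto_sum tendsto_mult_left) auto
  moreover have "pk S k i = (\<Sum>l<?N. mu0 S l * mstep ?N (P S) k l ?s) * P S ?s (zsnd S i)" for k
    unfolding pk_formula[OF N i] mu_formula[OF st s] ..
  ultimately have T: "(\<lambda>k. pk S k i) \<longlonglongrightarrow> (\<Sum>l<?N. mu0 S l * L l) * P S ?s (zsnd S i)" by simp
  then have "pinf S i = (\<Sum>l<?N. mu0 S l * L l) * P S ?s (zsnd S i)" unfolding pinf_def by (rule limI)
  then show ?thesis using T by simp
qed

lemma Amat_dims[simp]: "dim_row (Amat S i) = p S" "dim_col (Amat S i) = p S" unfolding Amat_def by simp_all
lemma Thstar_dims[simp]: "dim_row (Thstar S) = p S" "dim_col (Thstar S) = M S" unfolding Thstar_def by simp_all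
lemma Bmat_dims[simp]: "dim_row (Bmat S i) = p S" "dim_col (Bmat S i) = M S" unfolding Bmat_def by simp_all

lemma Amat_carrier: "Amat S i \<in> carrier_mat (p S) (p S)" unfolding Amat_def by simp

lemma Amat_idx: "a < p S \<Longrightarrow> b < p S \<Longrightarrow>
  Amat S i $$ (a,b) = phi S (zfst S i) a * (gam S * phi S (zsnd S i) b - phi S (zfst S i) b)"
  unfolding Amat_def by simp

lemma Wmat_carrier: "Wmat S \<in> carrier_mat (M S) (M S)" unfolding Wmat_def by simp

lemma Hmat_carrier: "Hmat S i \<in> carrier_mat (nxi S) (nxi S)"
  unfolding Hmat_def nxi_def using kron_carrier[of "1\<^sub>m (M S)" "Amat S i"] kron_carrier[of "Wmat S" "1\<^sub>m (p S)"]
    Amat_carrier[of S i] Wmat_carrier[of S] by auto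

lemma lt_div: "r < m * d \<Longrightarrow> r div d < (m::nat)"
  by (simp add: less_mult_imp_div_less)

lemma Hmat_idx:
  assumes r: "r < nxi S" and c: "c < nxi S"
  shows "Hmat S i $$ (r,c) = alpha S * (if r div p S = c div p S then Amat S i $$ (r mod p S, c mod p S) else 0)
     + (if r mod p S = c mod p S then W S (r div p S) (c div p S) else 0)"
proof -
  have r': "r < M S * p S" and c': "c < M S * p S" using r c unfolding nxi_def by auto
  have pp: "0 < p S" using r' by (cases "p S") auto
  have k1: "kron (1\<^sub>m (M S)) (Amat S i) $$ (r,c) = (if r div p S = c div p S then Amat S i $$ (r mod p S, c mod p S) else 0)"
    using r' c' Amat_carrier[of S i] lt_div[OF r'] lt_div[OF c'] by (simp add: kron_idx)
  have k2: "kron (Wmat S) (1\<^sub>m (p S)) $$ (r,c) = (if r mod p S = c mod p S then W S (r div p S) (c div p S) else 0)"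
    using r' c' Wmat_carrier[of S] lt_div[OF r'] lt_div[OF c'] pp by (simp add: kron_idx Wmat_def)
  have d1: "kron (1\<^sub>m (M S)) (Amat S i) \<in> carrier_mat (nxi S) (nxi S)"
    using kron_carrier[of "1\<^sub>m (M S)" "Amat S i"] Amat_carrier[of S i] unfolding nxi_def by simp
  have d2: "kron (Wmat S) (1\<^sub>m (p S)) \<in> carrier_mat (nxi S) (nxi S)"
    using kron_carrier[of "Wmat S" "1\<^sub>m (p S)"] Wmat_carrier[of S] unfolding nxi_def by simp
  show ?thesis unfolding Hmat_def using d1 d2 r c k1 k2 by simp
qed

lemma Gvec_carrier: "Gvec S i \<in> carrier_vec (nxi S)"
  unfolding Gvec_def vecm_def nxi_def by (simp add: mult.commute)

lemma Gvec_idx: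
  assumes r: "r < nxi S"
  shows "Gvec S i $ r = alpha S * (R S (r div p S) (zfst S i) (zsnd S i) * phi S (zfst S i) (r mod p S)
     + (\<Sum>l<p S. Amat S i $$ (r mod p S, l) * thstar S $ l))"
proof -
  have r': "r < p S * M S" using r unfolding nxi_def by (simp add: mult.commute)
  have pp: "0 < p S" using r' by (cases "p S") auto
  have m: "r div p S < M S" using r unfolding nxi_def by (simp add: lt_div)
  have a: "r mod p S < p S" using pp by simp
  have X: "Bmat S i + Amat S i * Thstar S \<in> carrier_mat (p S) (M S)"
    unfolding Bmat_def Thstar_def using Amat_carrier[of S i] by auto
  have "(Amat S i * Thstar S) $$ (r mod p S, r div p S) = (\<Sum>l<p S. Amat S i $$ (r mod p S, l) * thstar S $ l)"
    using Amat_carrier[of S i] a m unfolding Thstar_def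
    by (simp add: scalar_prod_def atLeast0LessThan)
  then show ?thesis
    unfolding Gvec_def vecm_def using X r' a m by (simp add: Bmat_def bvec_def mult.commute)
qed

lemma xi_idx: "r < nxi S \<Longrightarrow> xi S k \<omega> $ r = theta S k \<omega> (r div p S) (r mod p S) - thstar S $ (r mod p S)"
  unfolding xi_def by simp

lemma xi_carrier: "xi S k \<omega> \<in> carrier_vec (nxi S)" unfolding xi_def by simp

lemma theta_dep: "(\<forall>t\<le>k. \<omega> t = \<omega>' t) \<Longrightarrow> theta S k \<omega> m j = theta S k \<omega>' m j"
proof (induction k arbitrary: m j)
  case 0 then show ?case by simp
next
  case (Suc k)
  have IH: "theta S k \<omega> m j = theta S k \<omega>' m j" for m j using Suc by auto
  have e1: "\<omega> k = \<omega>' k" "\<omega> (Suc k) = \<omega>' (Suc k)" using Suc.prems by auto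
  show ?case unfolding theta.simps IH e1 ..
qed

lemma xi_dep: "dep k (xi S k)"
  unfolding dep_def
proof (intro allI impI)
  fix \<omega> \<omega>' :: "nat \<Rightarrow> nat" assume h: "\<forall>t\<le>k. \<omega> t = \<omega>' t"
  show "xi S k \<omega> = xi S k \<omega>'" unfolding xi_def theta_dep[OF h] ..
qed

lemma xi_dep_idx: "dep k (\<lambda>\<omega>. f (xi S k \<omega>))"
  unfolding dep_def
proof (intro allI impI)
  fix \<omega> \<omega>' :: "nat \<Rightarrow> nat" assume h: "\<forall>t\<le>k. \<omega> t = \<omega>' t"
  have "xi S k \<omega> = xi S k \<omega>'" using xi_dep[of k S] h unfolding dep_def by blast
  then show "f (xi S k \<omega>) = f (xi S k \<omega>')" by simp
qed

lemma sum_two_delta: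
  fixes X :: "nat \<Rightarrow> nat \<Rightarrow> real" and A B :: "nat \<Rightarrow> real"
  assumes m: "m < MM" and j: "j < pp"
  shows "(\<Sum>m'<MM. \<Sum>l<pp. (a * (if m = m' then A l else 0) + (if j = l then B m' else 0)) * X m' l) =
         a * (\<Sum>l<pp. A l * X m l) + (\<Sum>m'<MM. B m' * X m' j)"
proof -
  have "(\<Sum>m'<MM. \<Sum>l<pp. (a * (if m = m' then A l else 0) + (if j = l then B m' else 0)) * X m' l) =
        (\<Sum>m'<MM. (if m = m' then a * (\<Sum>l<pp. A l * X m l) else 0) + B m' * X m' j)"
  proof (intro sum.cong refl)
    fix m' assume "m' \<in> {..<MM}"
    have "(\<Sum>l<pp. (a * (if m = m' then A l else 0) + (if j = l then B m' else 0)) * X m' l) =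
          (\<Sum>l<pp. a * (if m = m' then A l else 0) * X m' l) + (\<Sum>l<pp. (if j = l then B m' else 0) * X m' l)"
      by (simp only: distrib_right sum.distrib)
    also have "(\<Sum>l<pp. a * (if m = m' then A l else 0) * X m' l) = (if m = m' then a * (\<Sum>l<pp. A l * X m l) else 0)"
      by (cases "m = m'") (simp_all add: sum_distrib_left mult.assoc)
    also have "(\<Sum>l<pp. (if j = l then B m' else 0) * X m' l) = (\<Sum>l<pp. if l = j then B m' * X m' l else 0)"
      by (intro sum.cong refl) auto
    also have "\<dots> = B m' * X m' j" using j by (subst sum.delta) auto
    finally show "(\<Sum>l<pp. (a * (if m = m' then A l else 0) + (if j = l then B m' else 0)) * X m' l) =
        (if m = m' then a * (\<Sum>l<pp. A l * X m l) else 0) + B m' * X m' j" .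
  qed
  also have "\<dots> = a * (\<Sum>l<pp. A l * X m l) + (\<Sum>m'<MM. B m' * X m' j)"
    using m by (simp add: sum.distrib)
  finally show ?thesis .
qed

lemma zfst_zidx: "y < nst S \<Longrightarrow> zfst S (zidx S x y) = x"
  unfolding zfst_def zidx_def by simp
lemma zsnd_zidx: "y < nst S \<Longrightarrow> zsnd S (zidx S x y) = y"
  unfolding zsnd_def zidx_def by simp

lemma final_arith:
  fixes X1 X2 X3 Ws t a f R :: real
  assumes "X1 + X2 = f * X3"
  shows "Ws + a * f * (X3 + R) - t = a * X1 + (Ws - t) + a * (R * f + X2)"
proof -
  have "Ws + a * f * (X3 + R) - t = Ws + a * (f * X3) + a * f * R - t" by (simp add: algebra_simps)
  also have "\<dots> = Ws + a * (X1 + X2) + a * f * R - t" using assms by simp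
  also have "\<dots> = a * X1 + (Ws - t) + a * (R * f + X2)" by (simp add: algebra_simps)
  finally show ?thesis .
qed

lemma xi_step:
  assumes Wrow: "\<And>m. m < M S \<Longrightarrow> (\<Sum>m'<M S. W S m m') = 1"
    and ws: "\<omega> (Suc k) < nst S" and r: "r < nxi S"
  shows "xi S (Suc k) \<omega> $ r = (\<Sum>c<nxi S. Hmat S (zidx S (\<omega> k) (\<omega> (Suc k))) $$ (r,c) * xi S k \<omega> $ c)
            + Gvec S (zidx S (\<omega> k) (\<omega> (Suc k))) $ r"
proof -
  define z where "z = zidx S (\<omega> k) (\<omega> (Suc k))"
  define s where "s = \<omega> k"
  define s' where "s' = \<omega> (Suc k)"
  define pp where "pp = p S"
  define MM where "MM = M S"
  define th where "th l = thstar S $ l" for l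
  define \<theta> where "\<theta> m l = theta S k \<omega> m l" for m l
  define A where "A j l = Amat S z $$ (j,l)" for j l
  have zs: "zfst S z = s" "zsnd S z = s'" unfolding z_def s_def s'_def using ws by (simp_all add: zfst_zidx zsnd_zidx)
  have nx: "nxi S = MM * pp" unfolding nxi_def MM_def pp_def ..
  have pp0: "0 < pp" using r nx by (cases pp) auto
  define m where "m = r div pp"
  define j where "j = r mod pp"
  have m: "m < MM" unfolding m_def using r nx by (simp add: lt_div)
  have j: "j < pp" unfolding j_def using pp0 by simp
  have A_eq: "A j l = phi S s j * (gam S * phi S s' l - phi S s l)" if "l < pp" for l
    unfolding A_def using Amat_idx[of j S l z] j that zs unfolding pp_def by simp
  have "(\<Sum>c<nxi S. Hmat S z $$ (r,c) * xi S k \<omega> $ c) = (\<Sum>m'<MM. \<Sum>l<pp. Hmat S z $$ (r, m'*pp + l) * xi S k \<omega> $ (m'*pp + l))"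
    unfolding nx by (rule sum_split_mult)
  also have "\<dots> = (\<Sum>m'<MM. \<Sum>l<pp. (alpha S * (if m = m' then A j l else 0) + (if j = l then W S m m' else 0)) * (\<theta> m' l - th l))"
  proof (intro sum.cong refl)
    fix m' l assume m': "m' \<in> {..<MM}" and l: "l \<in> {..<pp}"
    have c: "m'*pp + l < nxi S" using idx_lt[of m' MM l pp] m' l nx by simp
    have dm: "(m'*pp + l) div pp = m'" "(m'*pp + l) mod pp = l" using l by auto
    show "Hmat S z $$ (r, m'*pp + l) * xi S k \<omega> $ (m'*pp + l) = (alpha S * (if m = m' then A j l else 0) + (if j = l then W S m m' else 0)) * (\<theta> m' l - th l)"
      unfolding Hmat_idx[OF r c] xi_idx[OF c] using dm unfolding m_def j_def A_def \<theta>_def th_def pp_def[symmetric] by simp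
  qed
  also have "\<dots> = alpha S * (\<Sum>l<pp. A j l * (\<theta> m l - th l)) + (\<Sum>m'<MM. W S m m' * (\<theta> m' j - th j))"
    by (rule sum_two_delta[OF m j])
  finally have H: "(\<Sum>c<nxi S. Hmat S z $$ (r,c) * xi S k \<omega> $ c) = alpha S * (\<Sum>l<pp. A j l * (\<theta> m l - th l)) + (\<Sum>m'<MM. W S m m' * (\<theta> m' j - th j))" .
  have G: "Gvec S z $ r = alpha S * (R S m s s' * phi S s j + (\<Sum>l<pp. A j l * th l))"
    unfolding Gvec_idx[OF r] zs m_def j_def A_def th_def pp_def ..
  have Wsum: "(\<Sum>m'<MM. W S m m' * (\<theta> m' j - th j)) = (\<Sum>m'<MM. W S m m' * \<theta> m' j) - th j"
  proof -
    have "(\<Sum>m'<MM. W S m m' * (\<theta> m' j - th j)) = (\<Sum>m'<MM. W S m m' * \<theta> m' j) - (\<Sum>m'<MM. W S m m') * th j"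
      by (simp add: right_diff_distrib sum_subtractf sum_distrib_right)
    then show ?thesis using Wrow[of m] m unfolding MM_def by simp
  qed
  have Asum: "(\<Sum>l<pp. A j l * (\<theta> m l - th l)) + (\<Sum>l<pp. A j l * th l) = phi S s j * (\<Sum>l<pp. (gam S * phi S s' l - phi S s l) * \<theta> m l)"
  proof -
    have "(\<Sum>l<pp. A j l * (\<theta> m l - th l)) + (\<Sum>l<pp. A j l * th l) = (\<Sum>l<pp. A j l * \<theta> m l)"
      by (simp add: sum.distrib[symmetric] algebra_simps)
    also have "\<dots> = (\<Sum>l<pp. phi S s j * ((gam S * phi S s' l - phi S s l) * \<theta> m l))"
      by (intro sum.cong refl) (simp add: A_eq)
    finally show ?thesis by (simp add: sum_distrib_left)
  qed
  have lhs: "xi S (Suc k) \<omega> $ r = (\<Sum>m'<MM. W S m m' * \<theta> m' j) + alpha S * phi S s j * ((\<Sum>l<pp. (gam S * phi S s' l - phi S s l) * \<theta> m l) + R S m s s') - th j"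
    unfolding xi_idx[OF r] m_def j_def \<theta>_def th_def s_def s'_def MM_def pp_def by simp
  show ?thesis unfolding z_def[symmetric] H G lhs Wsum
    by (rule final_arith[OF Asum])
qed

definition qf :: "td_sys \<Rightarrow> nat \<Rightarrow> nat \<Rightarrow> nat \<Rightarrow> real" where
  "qf S k i c = pexp S (Suc k) (\<lambda>\<omega>. xi S k \<omega> $ c * zind S k i \<omega>)"

definition Qf :: "td_sys \<Rightarrow> nat \<Rightarrow> nat \<Rightarrow> nat \<Rightarrow> nat \<Rightarrow> real" where
  "Qf S k i c d = pexp S (Suc k) (\<lambda>\<omega>. xi S k \<omega> $ c * xi S k \<omega> $ d * zind S k i \<omega>)"

lemma pexp_scale_right: "pexp S K (\<lambda>\<omega>. f \<omega> * c) = pexp S K f * c"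
  using pexp_scale[of S K c f] by (simp add: mult.commute)

lemma inner_zsum:
  assumes N: "0 < nst S" and x: "x < nst S"
  shows "(\<Sum>s<nst S. P S x s * (if zidx S x s = j then 1 else 0)) = (if x = zfst S j then P S (zfst S j) (zsnd S j) else 0)"
proof -
  have "(\<Sum>s<nst S. P S x s * (if zidx S x s = j then 1 else 0)) =
        (\<Sum>s<nst S. if s = zsnd S j then (if x = zfst S j then P S x s else 0) else 0)"
    by (intro sum.cong refl) (auto simp: zidx_iff[OF N x])
  also have "\<dots> = (if x = zfst S j then P S x (zsnd S j) else 0)"
    using zsnd_lt[OF N, of j] by simp
  finally show ?thesis by simp
qed

lemma zidx_lt: "x < nst S \<Longrightarrow> y < nst S \<Longrightarrow> zidx S x y < nz S"
  unfolding zidx_def nz_def using idx_lt by blast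

lemma sum_zind:
  assumes x: "\<omega> k < nst S" and y: "\<omega> (Suc k) < nst S"
  shows "(\<Sum>i<nz S. zind S k i \<omega> * F i) = F (zidx S (\<omega> k) (\<omega> (Suc k)))"
proof -
  have "(\<Sum>i<nz S. zind S k i \<omega> * F i) = (\<Sum>i<nz S. if i = zidx S (\<omega> k) (\<omega> (Suc k)) then F i else 0)"
    unfolding zind_def by (intro sum.cong refl) auto
  also have "\<dots> = F (zidx S (\<omega> k) (\<omega> (Suc k)))" using zidx_lt[OF x y] by simp
  finally show ?thesis .
qed

lemma zP_zidx: "y < nst S \<Longrightarrow> zP S (zidx S x y) j = (if y = zfst S j then P S (zfst S j) (zsnd S j) else 0)"
  unfolding zP_def by (simp add: zsnd_zidx)

lemma step_common:
  assumes N: "0 < nst S" and j: "j < nz S" and fd: "dep (Suc k) f"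
  shows "pexp S (Suc (Suc k)) (\<lambda>\<omega>. f \<omega> * zind S (Suc k) j \<omega>) =
         pexp S (Suc k) (\<lambda>\<omega>. \<Sum>i<nz S. zP S i j * (zind S k i \<omega> * f \<omega>))"
proof -
  have "pexp S (Suc (Suc k)) (\<lambda>\<omega>. f \<omega> * zind S (Suc k) j \<omega>) =
        pexp S (Suc (Suc k)) (\<lambda>\<omega>. f \<omega> * (\<lambda>x y. if zidx S x y = j then 1 else 0) (\<omega> (Suc k)) (\<omega> (Suc (Suc k))))"
    unfolding zind_def by simp
  also have "\<dots> = pexp S (Suc k) (\<lambda>\<omega>. f \<omega> * (\<Sum>s<nst S. P S (\<omega> (Suc k)) s * (if zidx S (\<omega> (Suc k)) s = j then 1 else 0)))"
    by (rule pexp_Suc[OF fd])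
  also have "\<dots> = pexp S (Suc k) (\<lambda>\<omega>. \<Sum>i<nz S. zP S i j * (zind S k i \<omega> * f \<omega>))"
  proof (rule pexp_cong)
    fix \<omega> assume w: "\<omega> \<in> paths (nst S) (Suc k)"
    have x: "\<omega> k < nst S" and y: "\<omega> (Suc k) < nst S" using paths_val[OF w] by auto
    have "(\<Sum>i<nz S. zP S i j * (zind S k i \<omega> * f \<omega>)) = (\<Sum>i<nz S. zind S k i \<omega> * (zP S i j * f \<omega>))"
      by (simp add: mult_ac)
    also have "\<dots> = zP S (zidx S (\<omega> k) (\<omega> (Suc k))) j * f \<omega>" by (rule sum_zind[OF x y])
    also have "\<dots> = f \<omega> * (if \<omega> (Suc k) = zfst S j then P S (zfst S j) (zsnd S j) else 0)"
      using zP_zidx[OF y] by simp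
    finally show "f \<omega> * (\<Sum>s<nst S. P S (\<omega> (Suc k)) s * (if zidx S (\<omega> (Suc k)) s = j then 1 else 0)) =
        (\<Sum>i<nz S. zP S i j * (zind S k i \<omega> * f \<omega>))"
      unfolding inner_zsum[OF N y] by simp
  qed
  finally show ?thesis .
qed

lemma zind_xi_step:
  assumes Wrow: "\<And>m. m < M S \<Longrightarrow> (\<Sum>m'<M S. W S m m') = 1"
    and w: "\<omega> \<in> paths (nst S) (Suc k)" and i: "i < nz S" and a: "a < nxi S"
  shows "zind S k i \<omega> * xi S (Suc k) \<omega> $ a = zind S k i \<omega> * ((\<Sum>c<nxi S. Hmat S i $$ (a,c) * xi S k \<omega> $ c) + Gvec S i $ a)"
proof (cases "zidx S (\<omega> k) (\<omega> (Suc k)) = i")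
  case True
  have y: "\<omega> (Suc k) < nst S" using paths_val[OF w] by auto
  show ?thesis using xi_step[where \<omega>=\<omega> and k=k, OF Wrow y a] True by simp
next
  case False then show ?thesis unfolding zind_def by simp
qed

lemma q_rec:
  assumes N: "0 < nst S" and Wrow: "\<And>m. m < M S \<Longrightarrow> (\<Sum>m'<M S. W S m m') = 1"
    and j: "j < nz S" and a: "a < nxi S"
  shows "qf S (Suc k) j a = (\<Sum>i<nz S. zP S i j * ((\<Sum>c<nxi S. Hmat S i $$ (a,c) * qf S k i c) + Gvec S i $ a * pk S k i))"
proof -
  have "qf S (Suc k) j a = pexp S (Suc k) (\<lambda>\<omega>. \<Sum>i<nz S. zP S i j * (zind S k i \<omega> * xi S (Suc k) \<omega> $ a))"
    unfolding qf_def by (rule step_common[OF N j xi_dep_idx])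
  also have "\<dots> = pexp S (Suc k) (\<lambda>\<omega>. \<Sum>i<nz S. zP S i j *
      ((\<Sum>c<nxi S. Hmat S i $$ (a,c) * (xi S k \<omega> $ c * zind S k i \<omega>)) + Gvec S i $ a * zind S k i \<omega>))"
  proof (rule pexp_cong)
    fix \<omega> assume w: "\<omega> \<in> paths (nst S) (Suc k)"
    show "(\<Sum>i<nz S. zP S i j * (zind S k i \<omega> * xi S (Suc k) \<omega> $ a)) = (\<Sum>i<nz S. zP S i j *
      ((\<Sum>c<nxi S. Hmat S i $$ (a,c) * (xi S k \<omega> $ c * zind S k i \<omega>)) + Gvec S i $ a * zind S k i \<omega>))"
    proof (intro sum.cong refl)
      fix i assume "i \<in> {..<nz S}"
      then have i: "i < nz S" by simp
      show "zP S i j * (zind S k i \<omega> * xi S (Suc k) \<omega> $ a) = zP S i j *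
         ((\<Sum>c<nxi S. Hmat S i $$ (a,c) * (xi S k \<omega> $ c * zind S k i \<omega>)) + Gvec S i $ a * zind S k i \<omega>)"
      proof -
        have e: "zind S k i \<omega> * xi S (Suc k) \<omega> $ a = zind S k i \<omega> * ((\<Sum>c<nxi S. Hmat S i $$ (a,c) * xi S k \<omega> $ c) + Gvec S i $ a)"
          by (rule zind_xi_step[OF Wrow w i a])
        show ?thesis unfolding e by (simp add: sum_distrib_left sum_distrib_right mult_ac distrib_left)
      qed
    qed
  qed
  also have "\<dots> = (\<Sum>i<nz S. zP S i j * ((\<Sum>c<nxi S. Hmat S i $$ (a,c) * qf S k i c) + Gvec S i $ a * pk S k i))"
    unfolding qf_def pk_def by (simp add: pexp_sum pexp_scale pexp_scale_right pexp_add)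
  finally show ?thesis .
qed


lemma zind_xi_step2:
  assumes Wrow: "\<And>m. m < M S \<Longrightarrow> (\<Sum>m'<M S. W S m m') = 1"
    and w: "\<omega> \<in> paths (nst S) (Suc k)" and i: "i < nz S" and a1: "a1 < nxi S" and a2: "a2 < nxi S"
  shows "zind S k i \<omega> * (xi S (Suc k) \<omega> $ a1 * xi S (Suc k) \<omega> $ a2) =
         zind S k i \<omega> * (((\<Sum>c<nxi S. Hmat S i $$ (a1,c) * xi S k \<omega> $ c) + Gvec S i $ a1) *
                           ((\<Sum>c<nxi S. Hmat S i $$ (a2,c) * xi S k \<omega> $ c) + Gvec S i $ a2))"
proof (cases "zidx S (\<omega> k) (\<omega> (Suc k)) = i")
  case True
  have y: "\<omega> (Suc k) < nst S" using paths_val[OF w] by auto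
  show ?thesis using xi_step[where \<omega>=\<omega> and k=k, OF Wrow y a1] xi_step[where \<omega>=\<omega> and k=k, OF Wrow y a2] True by simp
next
  case False then show ?thesis unfolding zind_def by simp
qed

lemma prod_expand:
  fixes hA hB x :: "nat \<Rightarrow> real"
  shows "z * (((\<Sum>c<n. hA c * x c) + gA) * ((\<Sum>c<n. hB c * x c) + gB)) =
     (\<Sum>d<n. \<Sum>c<n. hB d * hA c * (x c * x d * z)) + gA * (\<Sum>c<n. hB c * (x c * z))
       + gB * (\<Sum>c<n. hA c * (x c * z)) + gA * gB * z"
proof -
  have pr: "(\<Sum>c<n. hA c * x c) * (\<Sum>c<n. hB c * x c) = (\<Sum>d<n. \<Sum>c<n. hB d * hA c * (x c * x d))"
  proof -
    have "(\<Sum>c<n. hA c * x c) * (\<Sum>d<n. hB d * x d) = (\<Sum>c<n. \<Sum>d<n. hA c * x c * (hB d * x d))"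
      by (rule sum_product)
    also have "\<dots> = (\<Sum>d<n. \<Sum>c<n. hA c * x c * (hB d * x d))" by (rule sum.swap)
    also have "\<dots> = (\<Sum>d<n. \<Sum>c<n. hB d * hA c * (x c * x d))" by (simp add: mult_ac)
    finally show ?thesis .
  qed
  have "z * (((\<Sum>c<n. hA c * x c) + gA) * ((\<Sum>c<n. hB c * x c) + gB)) =
        z * ((\<Sum>c<n. hA c * x c) * (\<Sum>c<n. hB c * x c)) + gA * (z * (\<Sum>c<n. hB c * x c))
          + gB * (z * (\<Sum>c<n. hA c * x c)) + gA * gB * z"
    by (simp add: algebra_simps)
  also have "\<dots> = (\<Sum>d<n. \<Sum>c<n. hB d * hA c * (x c * x d * z)) + gA * (\<Sum>c<n. hB c * (x c * z))
       + gB * (\<Sum>c<n. hA c * (x c * z)) + gA * gB * z"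
    unfolding pr by (simp add: sum_distrib_left mult_ac)
  finally show ?thesis .
qed

lemma Q_rec:
  assumes N: "0 < nst S" and Wrow: "\<And>m. m < M S \<Longrightarrow> (\<Sum>m'<M S. W S m m') = 1"
    and j: "j < nz S" and a1: "a1 < nxi S" and a2: "a2 < nxi S"
  shows "Qf S (Suc k) j a1 a2 = (\<Sum>i<nz S. zP S i j *
     ((\<Sum>d<nxi S. \<Sum>c<nxi S. Hmat S i $$ (a2,d) * Hmat S i $$ (a1,c) * Qf S k i c d)
      + Gvec S i $ a1 * (\<Sum>c<nxi S. Hmat S i $$ (a2,c) * qf S k i c)
      + Gvec S i $ a2 * (\<Sum>c<nxi S. Hmat S i $$ (a1,c) * qf S k i c)
      + Gvec S i $ a1 * Gvec S i $ a2 * pk S k i))"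
proof -
  have "Qf S (Suc k) j a1 a2 = pexp S (Suc (Suc k)) (\<lambda>\<omega>. (xi S (Suc k) \<omega> $ a1 * xi S (Suc k) \<omega> $ a2) * zind S (Suc k) j \<omega>)"
    unfolding Qf_def ..
  also have "\<dots> = pexp S (Suc k) (\<lambda>\<omega>. \<Sum>i<nz S. zP S i j * (zind S k i \<omega> * (xi S (Suc k) \<omega> $ a1 * xi S (Suc k) \<omega> $ a2)))"
    by (rule step_common[OF N j xi_dep_idx])
  also have "\<dots> = pexp S (Suc k) (\<lambda>\<omega>. \<Sum>i<nz S. zP S i j *
     ((\<Sum>d<nxi S. \<Sum>c<nxi S. Hmat S i $$ (a2,d) * Hmat S i $$ (a1,c) * (xi S k \<omega> $ c * xi S k \<omega> $ d * zind S k i \<omega>))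
      + Gvec S i $ a1 * (\<Sum>c<nxi S. Hmat S i $$ (a2,c) * (xi S k \<omega> $ c * zind S k i \<omega>))
      + Gvec S i $ a2 * (\<Sum>c<nxi S. Hmat S i $$ (a1,c) * (xi S k \<omega> $ c * zind S k i \<omega>))
      + Gvec S i $ a1 * Gvec S i $ a2 * zind S k i \<omega>))"
  proof (rule pexp_cong)
    fix \<omega> assume w: "\<omega> \<in> paths (nst S) (Suc k)"
    show "(\<Sum>i<nz S. zP S i j * (zind S k i \<omega> * (xi S (Suc k) \<omega> $ a1 * xi S (Suc k) \<omega> $ a2))) = (\<Sum>i<nz S. zP S i j *
     ((\<Sum>d<nxi S. \<Sum>c<nxi S. Hmat S i $$ (a2,d) * Hmat S i $$ (a1,c) * (xi S k \<omega> $ c * xi S k \<omega> $ d * zind S k i \<omega>))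
      + Gvec S i $ a1 * (\<Sum>c<nxi S. Hmat S i $$ (a2,c) * (xi S k \<omega> $ c * zind S k i \<omega>))
      + Gvec S i $ a2 * (\<Sum>c<nxi S. Hmat S i $$ (a1,c) * (xi S k \<omega> $ c * zind S k i \<omega>))
      + Gvec S i $ a1 * Gvec S i $ a2 * zind S k i \<omega>))"
    proof (intro sum.cong refl)
      fix i assume "i \<in> {..<nz S}"
      then have i: "i < nz S" by simp
      show "zP S i j * (zind S k i \<omega> * (xi S (Suc k) \<omega> $ a1 * xi S (Suc k) \<omega> $ a2)) = zP S i j *
     ((\<Sum>d<nxi S. \<Sum>c<nxi S. Hmat S i $$ (a2,d) * Hmat S i $$ (a1,c) * (xi S k \<omega> $ c * xi S k \<omega> $ d * zind S k i \<omega>))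
      + Gvec S i $ a1 * (\<Sum>c<nxi S. Hmat S i $$ (a2,c) * (xi S k \<omega> $ c * zind S k i \<omega>))
      + Gvec S i $ a2 * (\<Sum>c<nxi S. Hmat S i $$ (a1,c) * (xi S k \<omega> $ c * zind S k i \<omega>))
      + Gvec S i $ a1 * Gvec S i $ a2 * zind S k i \<omega>)"
      proof -
        note e = zind_xi_step2[OF Wrow w i a1 a2]
        note pe = prod_expand[where hA = "\<lambda>c. Hmat S i $$ (a1,c)" and hB = "\<lambda>c. Hmat S i $$ (a2,c)" and x = "\<lambda>c. xi S k \<omega> $ c"
           and z = "zind S k i \<omega>" and n = "nxi S" and gA = "Gvec S i $ a1" and gB = "Gvec S i $ a2"]
        show ?thesis using e pe by simp
      qed
    qed
  qed
  also have "\<dots> = (\<Sum>i<nz S. zP S i j *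
     ((\<Sum>d<nxi S. \<Sum>c<nxi S. Hmat S i $$ (a2,d) * Hmat S i $$ (a1,c) * Qf S k i c d)
      + Gvec S i $ a1 * (\<Sum>c<nxi S. Hmat S i $$ (a2,c) * qf S k i c)
      + Gvec S i $ a2 * (\<Sum>c<nxi S. Hmat S i $$ (a1,c) * qf S k i c)
      + Gvec S i $ a1 * Gvec S i $ a2 * pk S k i))"
    unfolding qf_def Qf_def pk_def by (simp add: pexp_sum pexp_scale pexp_scale_right pexp_add)
  finally show ?thesis .
qed

lemma idx_decomp: assumes "r < Z * (n::nat)" shows "r div n < Z \<and> r mod n < n \<and> r = (r div n) * n + r mod n"
proof -
  have n: "0 < n" using assms by (cases n) auto
  then show ?thesis using assms by (simp add: lt_div)
qed

definition uq :: "td_sys \<Rightarrow> nat \<Rightarrow> real vec" where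
  "uq S k = block_vec (nz S) (nxi S) (\<lambda>j. vec (nxi S) (\<lambda>r. \<Sum>i<nz S. zP S i j * pk S k i * Gvec S i $ r))"

definition uQ :: "td_sys \<Rightarrow> nat \<Rightarrow> real vec" where
  "uQ S k = block_vec (nz S) ((nxi S)\<^sup>2) (\<lambda>j. vec ((nxi S)\<^sup>2) (\<lambda>r. \<Sum>i<nz S. zP S i j * pk S k i *
        kron (col_mat (Gvec S i)) (col_mat (Gvec S i)) $$ (r, 0)))"

lemma qv_carrier: "qv S k \<in> carrier_vec (nz S * nxi S)" unfolding qv_def by simp
lemma Qv_carrier: "Qv S k \<in> carrier_vec (nz S * (nxi S)\<^sup>2)" unfolding Qv_def by simp

lemma qv_idx: assumes "i < nz S" "c < nxi S" shows "qv S k $ (i * nxi S + c) = qf S k i c"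
  using assms idx_lt[of i "nz S" c "nxi S"] unfolding qv_def qf_def by simp

lemma Qv_idx: assumes i: "i < nz S" and c: "c < nxi S" and d: "d < nxi S"
  shows "Qv S k $ (i * (nxi S * nxi S) + (d * nxi S + c)) = Qf S k i c d"
proof -
  have dc: "d * nxi S + c < nxi S * nxi S" using idx_lt[OF d c] .
  have lt: "i * (nxi S * nxi S) + (d * nxi S + c) < nz S * (nxi S * nxi S)" using idx_lt[OF i dc] .
  have m1: "(i * (nxi S * nxi S) + (d * nxi S + c)) mod (nxi S * nxi S) = d * nxi S + c"
    and m2: "(i * (nxi S * nxi S) + (d * nxi S + c)) div (nxi S * nxi S) = i"
    using idx_mod[OF dc] idx_div[OF dc] by auto
  have m3: "(d * nxi S + c) mod nxi S = c" "(d * nxi S + c) div nxi S = d" using c by auto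
  have m0: "(d * nxi S + c) mod (nxi S * nxi S) = d * nxi S + c" using dc by simp
  show ?thesis using lt unfolding Qv_def Qf_def power2_eq_square using c by (simp add: m1 m2 m3 m0 mult_ac)
qed

lemma Hmat_dims[simp]: "dim_row (Hmat S i) = nxi S" "dim_col (Hmat S i) = nxi S"
  using Hmat_carrier[of S i] by auto

lemma Gvec_dim[simp]: "dim_vec (Gvec S i) = nxi S"
  using Gvec_carrier[of S i] by auto

lemma H11_carrier: "H11 S \<in> carrier_mat (nz S * nxi S) (nz S * nxi S)"
  unfolding H11_def by (rule block_mat_carrier)

lemma qv_rec:
  assumes N: "0 < nst S" and Wrow: "\<And>m. m < M S \<Longrightarrow> (\<Sum>m'<M S. W S m m') = 1"
  shows "qv S (Suc k) = H11 S *\<^sub>v qv S k + uq S k"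
proof (rule eq_vecI)
  show "dim_vec (qv S (Suc k)) = dim_vec (H11 S *\<^sub>v qv S k + uq S k)"
    unfolding qv_def uq_def block_vec_def using H11_carrier[of S] by simp
  fix r assume "r < dim_vec (H11 S *\<^sub>v qv S k + uq S k)"
  then have r: "r < nz S * nxi S" unfolding uq_def block_vec_def by simp
  define j where "j = r div nxi S"
  define a where "a = r mod nxi S"
  have j: "j < nz S" and a: "a < nxi S" and rja: "r = j * nxi S + a"
    using idx_decomp[OF r] unfolding j_def a_def by auto
  have uqc: "uq S k \<in> carrier_vec (nz S * nxi S)" unfolding uq_def by (rule block_vec_carrier)
  have Hq: "(H11 S *\<^sub>v qv S k) $ r = (\<Sum>i<nz S. \<Sum>c<nxi S. zP S i j * Hmat S i $$ (a,c) * qf S k i c)"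
    unfolding rja H11_def block_mat_mult_vec[OF j a qv_carrier]
    by (intro sum.cong refl) (use a in \<open>simp add: qv_idx\<close>)
  have u: "uq S k $ r = (\<Sum>i<nz S. zP S i j * pk S k i * Gvec S i $ a)"
    unfolding rja uq_def block_vec_idx[OF j a] using a by simp
  have "(H11 S *\<^sub>v qv S k + uq S k) $ r = (H11 S *\<^sub>v qv S k) $ r + uq S k $ r"
    using r uqc H11_carrier[of S] by simp
  also have "\<dots> = (\<Sum>i<nz S. zP S i j * ((\<Sum>c<nxi S. Hmat S i $$ (a,c) * qf S k i c) + Gvec S i $ a * pk S k i))"
    unfolding Hq u by (simp add: sum_distrib_left distrib_left sum.distrib mult_ac)
  also have "\<dots> = qv S (Suc k) $ r" unfolding rja qv_idx[OF j a] using q_rec[OF N Wrow j a, of k] by simp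
  finally show "qv S (Suc k) $ r = (H11 S *\<^sub>v qv S k + uq S k) $ r" by simp
qed


lemma H22_carrier: "H22 S \<in> carrier_mat (nz S * (nxi S)\<^sup>2) (nz S * (nxi S)\<^sup>2)"
  unfolding H22_def by (rule block_mat_carrier)

lemma H21_carrier: "H21 S \<in> carrier_mat (nz S * (nxi S)\<^sup>2) (nz S * nxi S)"
  unfolding H21_def by (rule block_mat_carrier)

lemma col_mat_idx: "i < dim_vec v \<Longrightarrow> j < 1 \<Longrightarrow> col_mat v $$ (i,j) = v $ i"
  unfolding col_mat_def by simp

lemma col_mat_dims[simp]: "dim_row (col_mat v) = dim_vec v" "dim_col (col_mat v) = 1"
  unfolding col_mat_def by simp_all

lemma H21_block_idx:
  assumes a1: "a1 < nxi S" and a2: "a2 < nxi S" and c: "c < nxi S"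
  shows "(zP S i j \<cdot>\<^sub>m (kron (Hmat S i) (col_mat (Gvec S i)) + kron (col_mat (Gvec S i)) (Hmat S i))) $$ (a2 * nxi S + a1, c)
     = zP S i j * (Hmat S i $$ (a2, c) * Gvec S i $ a1 + Gvec S i $ a2 * Hmat S i $$ (a1, c))"
proof -
  let ?n = "nxi S"
  have b: "a2 * ?n + a1 < ?n * ?n" using idx_lt[OF a2 a1] .
  have bd: "(a2 * ?n + a1) div ?n = a2" "(a2 * ?n + a1) mod ?n = a1" using a1 by auto
  have cd: "c div ?n = 0" "c mod ?n = c" using c by auto
  have k1: "kron (Hmat S i) (col_mat (Gvec S i)) $$ (a2 * ?n + a1, c) = Hmat S i $$ (a2, c) * Gvec S i $ a1"
    using b c by (simp add: kron_idx bd col_mat_idx a1)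
  have k2: "kron (col_mat (Gvec S i)) (Hmat S i) $$ (a2 * ?n + a1, c) = Gvec S i $ a2 * Hmat S i $$ (a1, c)"
    using b c a1 by (simp add: kron_idx bd cd col_mat_idx a2)
  have d1: "dim_row (kron (col_mat (Gvec S i)) (Hmat S i)) = ?n * ?n" "dim_col (kron (col_mat (Gvec S i)) (Hmat S i)) = ?n"
    unfolding kron_def by simp_all
  show ?thesis using b c d1 k1 k2 by simp
qed

lemma uQ_idx:
  assumes j: "j < nz S" and a1: "a1 < nxi S" and a2: "a2 < nxi S"
  shows "uQ S k $ (j * (nxi S * nxi S) + (a2 * nxi S + a1)) = (\<Sum>i<nz S. zP S i j * pk S k i * (Gvec S i $ a2 * Gvec S i $ a1))"
proof -
  let ?n = "nxi S"
  have b: "a2 * ?n + a1 < ?n * ?n" using idx_lt[OF a2 a1] .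
  have bd: "(a2 * ?n + a1) div ?n = a2" "(a2 * ?n + a1) mod ?n = a1" using a1 by auto
  have "uQ S k $ (j * (?n * ?n) + (a2 * ?n + a1)) = (\<Sum>i<nz S. zP S i j * pk S k i *
        kron (col_mat (Gvec S i)) (col_mat (Gvec S i)) $$ (a2 * ?n + a1, 0))"
    unfolding uQ_def power2_eq_square block_vec_idx[OF j b] using b by simp
  also have "\<dots> = (\<Sum>i<nz S. zP S i j * pk S k i * (Gvec S i $ a2 * Gvec S i $ a1))"
    using b by (intro sum.cong refl) (simp add: kron_idx bd col_mat_idx a1 a2)
  finally show ?thesis .
qed

lemma Qv_rec:
  assumes N: "0 < nst S" and Wrow: "\<And>m. m < M S \<Longrightarrow> (\<Sum>m'<M S. W S m m') = 1"
  shows "Qv S (Suc k) = H22 S *\<^sub>v Qv S k + (H21 S *\<^sub>v qv S k + uQ S k)"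
proof (rule eq_vecI)
  let ?n = "nxi S"
  have uQc: "uQ S k \<in> carrier_vec (nz S * ?n\<^sup>2)" unfolding uQ_def by (rule block_vec_carrier)
  show "dim_vec (Qv S (Suc k)) = dim_vec (H22 S *\<^sub>v Qv S k + (H21 S *\<^sub>v qv S k + uQ S k))"
    using uQc unfolding Qv_def by simp
  fix r assume "r < dim_vec (H22 S *\<^sub>v Qv S k + (H21 S *\<^sub>v qv S k + uQ S k))"
  then have r: "r < nz S * (?n * ?n)" using uQc by (simp add: power2_eq_square)
  define j where "j = r div (?n * ?n)"
  define b where "b = r mod (?n * ?n)"
  have j: "j < nz S" and b: "b < ?n * ?n" and rjb: "r = j * (?n * ?n) + b"
    using idx_decomp[OF r] unfolding j_def b_def by auto
  define a1 where "a1 = b mod ?n"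
  define a2 where "a2 = b div ?n"
  have a2: "a2 < ?n" and a1: "a1 < ?n" and ba: "b = a2 * ?n + a1"
    using idx_decomp[OF b] unfolding a1_def a2_def by auto
  have rr: "r = j * (?n * ?n) + (a2 * ?n + a1)" using rjb ba by simp
  have H2: "(H22 S *\<^sub>v Qv S k) $ r = (\<Sum>i<nz S. zP S i j * (\<Sum>d<?n. \<Sum>c<?n. Hmat S i $$ (a2,d) * Hmat S i $$ (a1,c) * Qf S k i c d))"
  proof -
    have "(H22 S *\<^sub>v Qv S k) $ r = (\<Sum>i<nz S. zP S i j * (\<Sum>d<?n. \<Sum>c<?n. Hmat S i $$ (a2,d) * Hmat S i $$ (a1,c) * Qv S k $ (i*(?n*?n) + (d*?n + c))))"
      unfolding rr H22_def power2_eq_square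
      by (rule E2[OF Hmat_carrier j a1 a2]) (use Qv_carrier[of S k] in \<open>simp add: power2_eq_square\<close>)
    also have "\<dots> = (\<Sum>i<nz S. zP S i j * (\<Sum>d<?n. \<Sum>c<?n. Hmat S i $$ (a2,d) * Hmat S i $$ (a1,c) * Qf S k i c d))"
      by (intro sum.cong refl) (simp add: Qv_idx)
    finally show ?thesis .
  qed
  have H1: "(H21 S *\<^sub>v qv S k) $ r = (\<Sum>i<nz S. \<Sum>c<?n. zP S i j * (Hmat S i $$ (a2, c) * Gvec S i $ a1 + Gvec S i $ a2 * Hmat S i $$ (a1, c)) * qf S k i c)"
  proof -
    have "(H21 S *\<^sub>v qv S k) $ r = (\<Sum>i<nz S. \<Sum>c<?n. (zP S i j \<cdot>\<^sub>m (kron (Hmat S i) (col_mat (Gvec S i)) + kron (col_mat (Gvec S i)) (Hmat S i))) $$ (a2 * ?n + a1, c) * qv S k $ (i * ?n + c))"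
      unfolding rr H21_def power2_eq_square
      by (rule block_mat_mult_vec[OF j _ qv_carrier]) (rule idx_lt[OF a2 a1])
    also have "\<dots> = (\<Sum>i<nz S. \<Sum>c<?n. zP S i j * (Hmat S i $$ (a2, c) * Gvec S i $ a1 + Gvec S i $ a2 * Hmat S i $$ (a1, c)) * qf S k i c)"
      by (intro sum.cong refl) (simp add: H21_block_idx[OF a1 a2] qv_idx)
    finally show ?thesis .
  qed
  have U: "uQ S k $ r = (\<Sum>i<nz S. zP S i j * pk S k i * (Gvec S i $ a2 * Gvec S i $ a1))"
    using uQ_idx[OF j a1 a2, of k] rr by simp
  have "(H22 S *\<^sub>v Qv S k + (H21 S *\<^sub>v qv S k + uQ S k)) $ r = (H22 S *\<^sub>v Qv S k) $ r + (H21 S *\<^sub>v qv S k) $ r + uQ S k $ r"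
    using r uQc H22_carrier[of S] H21_carrier[of S] by (simp add: power2_eq_square)
  also have "\<dots> = (\<Sum>i<nz S. zP S i j *
     ((\<Sum>d<?n. \<Sum>c<?n. Hmat S i $$ (a2,d) * Hmat S i $$ (a1,c) * Qf S k i c d)
      + Gvec S i $ a1 * (\<Sum>c<?n. Hmat S i $$ (a2,c) * qf S k i c)
      + Gvec S i $ a2 * (\<Sum>c<?n. Hmat S i $$ (a1,c) * qf S k i c)
      + Gvec S i $ a1 * Gvec S i $ a2 * pk S k i))"
    unfolding H2 H1 U
    by (simp add: sum_distrib_left distrib_left distrib_right sum.distrib mult_ac)
  also have "\<dots> = Qv S (Suc k) $ r" unfolding rr Qv_idx[OF j a1 a2] using Q_rec[OF N Wrow j a1 a2, of k] by simp
  finally show "Qv S (Suc k) $ r = (H22 S *\<^sub>v Qv S k + (H21 S *\<^sub>v qv S k + uQ S k)) $ r" by simp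
qed

lemma mat_vec_tendsto:
  assumes A: "A \<in> carrier_mat m n" and x: "vec_tendsto x L" and L: "L \<in> carrier_vec n" and i: "i < m"
  shows "(\<lambda>k. (A *\<^sub>v x k) $ i) \<longlonglongrightarrow> (A *\<^sub>v L) $ i"
proof -
  have xk: "x k \<in> carrier_vec n" for k using x L unfolding vec_tendsto_def carrier_vec_def by auto
  have t: "(\<lambda>k. x k $ j) \<longlonglongrightarrow> L $ j" if "j < n" for j using x L that unfolding vec_tendsto_def by auto
  have "(\<lambda>k. \<Sum>j<n. A $$ (i,j) * x k $ j) \<longlonglongrightarrow> (\<Sum>j<n. A $$ (i,j) * L $ j)"
    by (intro tendsto_sum tendsto_mult tendsto_const t) auto
  then show ?thesis using mult_mat_vec_index_sum[OF A xk i] mult_mat_vec_index_sum[OF A L i] by simp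
qed

lemma Cdelta_carrier: "Cdelta S \<in> carrier_mat 1 (nz S * (nxi S)\<^sup>2)"
  unfolding Cdelta_def kron_def col_mat_def vecm_def power2_eq_square by simp

lemma Cdelta_idx:
  assumes i: "i < nz S" and c: "c < nxi S" and d: "d < nxi S"
  shows "Cdelta S $$ (0, i * (nxi S * nxi S) + (d * nxi S + c)) = (1 / real (M S)) * (if c = d then 1 else 0)"
proof -
  let ?n = "nxi S"
  have dc: "d * ?n + c < ?n * ?n" using idx_lt[OF d c] .
  have col: "i * (?n * ?n) + (d * ?n + c) < nz S * (?n * ?n)" using idx_lt[OF i dc] .
  have dm: "(i * (?n * ?n) + (d * ?n + c)) div (?n * ?n) = i" "(i * (?n * ?n) + (d * ?n + c)) mod (?n * ?n) = d * ?n + c"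
    using idx_div[OF dc] idx_mod[OF dc] by auto
  have dm2: "(d * ?n + c) mod ?n = c" "(d * ?n + c) div ?n = d" using c by auto
  define T where "T = transpose_mat (col_mat (vecm (1\<^sub>m ?n)))"
  have Td: "dim_row T = 1" "dim_col T = ?n * ?n" unfolding T_def vecm_def col_mat_def by simp_all
  have T0: "T $$ (0, d * ?n + c) = (if c = d then 1 else 0)"
    unfolding T_def using dc c d by (simp add: col_mat_idx vecm_def dm2)
  have "kron (mat 1 (nz S) (\<lambda>_. 1)) T $$ (0, i * (?n * ?n) + (d * ?n + c)) = (if c = d then 1 else 0)"
  proof -
    have m0: "(d * ?n + c) mod (?n * ?n) = d * ?n + c" using dc by simp
    show ?thesis using col Td T0 i by (simp add: kron_idx dm m0)
  qed
  moreover have "kron (mat 1 (nz S) (\<lambda>_. 1)) T \<in> carrier_mat 1 (nz S * (?n * ?n))"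
    using kron_carrier[of "mat 1 (nz S) (\<lambda>_. 1)" T] Td by simp
  ultimately show ?thesis unfolding Cdelta_def T_def[symmetric] using col by simp
qed

lemma delta_eq:
  assumes N: "0 < nst S" and st: "stochastic_matrix (nst S) (P S)"
  shows "delta S k = (Cdelta S *\<^sub>v Qv S k) $ 0"
proof -
  let ?n = "nxi S"
  have Qc: "Qv S k \<in> carrier_vec (nz S * (?n*?n))" using Qv_carrier[of S k] by (simp add: power2_eq_square)
  have Cc: "Cdelta S \<in> carrier_mat 1 (nz S * (?n*?n))" using Cdelta_carrier[of S] by (simp add: power2_eq_square)
  have "(Cdelta S *\<^sub>v Qv S k) $ 0 = (\<Sum>col<nz S * (?n * ?n). Cdelta S $$ (0, col) * Qv S k $ col)"
    by (rule mult_mat_vec_index_sum[OF Cc Qc]) simp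
  also have "\<dots> = (\<Sum>i<nz S. \<Sum>b<?n * ?n. Cdelta S $$ (0, i * (?n * ?n) + b) * Qv S k $ (i * (?n * ?n) + b))"
    by (rule sum_split_mult)
  also have "\<dots> = (\<Sum>i<nz S. \<Sum>d<?n. \<Sum>c<?n. Cdelta S $$ (0, i * (?n * ?n) + (d * ?n + c)) * Qv S k $ (i * (?n * ?n) + (d * ?n + c)))"
    by (rule sum.cong[OF refl], rule sum_split_mult)
  also have "\<dots> = (\<Sum>i<nz S. \<Sum>d<?n. \<Sum>c<?n. (1 / real (M S)) * (if c = d then Qf S k i c d else 0))"
    by (intro sum.cong refl) (simp add: Cdelta_idx Qv_idx)
  also have "\<dots> = (1 / real (M S)) * (\<Sum>i<nz S. \<Sum>d<?n. Qf S k i d d)"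
    by (simp add: sum_distrib_left if_distrib cong: if_cong)
  also have "(\<Sum>i<nz S. \<Sum>d<?n. Qf S k i d d) = pexp S (Suc k) (\<lambda>\<omega>. \<Sum>i<nz S. \<Sum>d<?n. xi S k \<omega> $ d * xi S k \<omega> $ d * zind S k i \<omega>)"
    unfolding Qf_def by (simp add: pexp_sum)
  also have "\<dots> = pexp S (Suc k) (\<lambda>\<omega>. \<Sum>d<?n. (xi S k \<omega> $ d)\<^sup>2)"
  proof (rule pexp_cong)
    fix \<omega> assume w: "\<omega> \<in> paths (nst S) (Suc k)"
    have x: "\<omega> k < nst S" and y: "\<omega> (Suc k) < nst S" using paths_val[OF w] by auto
    have "(\<Sum>i<nz S. \<Sum>d<?n. xi S k \<omega> $ d * xi S k \<omega> $ d * zind S k i \<omega>) = (\<Sum>i<nz S. zind S k i \<omega> * (\<Sum>d<?n. (xi S k \<omega> $ d)\<^sup>2))"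
      by (simp add: sum_distrib_left power2_eq_square mult_ac)
    also have "\<dots> = (\<Sum>d<?n. (xi S k \<omega> $ d)\<^sup>2)" by (rule sum_zind[OF x y])
    finally show "(\<Sum>i<nz S. \<Sum>d<?n. xi S k \<omega> $ d * xi S k \<omega> $ d * zind S k i \<omega>) = (\<Sum>d<?n. (xi S k \<omega> $ d)\<^sup>2)" .
  qed
  also have "\<dots> = pexp S k (\<lambda>\<omega>. \<Sum>d<?n. (xi S k \<omega> $ d)\<^sup>2)"
    by (rule pexp_marg[OF st xi_dep_idx])
  finally show ?thesis unfolding delta_def by simp
qed

lemma zP_nonneg: assumes st: "stochastic_matrix (nst S) (P S)" and N: "0 < nst S" and j: "j < nz S"
  shows "0 \<le> zP S i j"
  using st zfst_lt[OF j] zsnd_lt[OF N, of j] unfolding zP_def stochastic_matrix_def by auto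

lemma zP_rowsum: assumes st: "stochastic_matrix (nst S) (P S)" and N: "0 < nst S"
  shows "(\<Sum>j<nz S. zP S i j) = 1"
proof -
  let ?N = "nst S"
  have "(\<Sum>j<nz S. zP S i j) = (\<Sum>s<?N. \<Sum>s'<?N. zP S i (s * ?N + s'))"
    unfolding nz_def by (rule sum_split_mult)
  also have "\<dots> = (\<Sum>s<?N. \<Sum>s'<?N. if s = zsnd S i then P S s s' else 0)"
    by (intro sum.cong refl) (simp add: zP_def zfst_def zsnd_def)
  also have "\<dots> = (\<Sum>s'<?N. P S (zsnd S i) s')" using zsnd_lt[OF N, of i]
    by (simp add: sum.swap[of _ "{..<?N}" "{..<?N}"] if_distrib cong: if_cong)
  also have "\<dots> = 1" using st zsnd_lt[OF N, of i] unfolding stochastic_matrix_def by simp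
  finally show ?thesis .
qed

lemma uq_tendsto:
  assumes pkt: "\<And>i. i < nz S \<Longrightarrow> (\<lambda>k. pk S k i) \<longlonglongrightarrow> pinf S i" and r: "r < nz S * nxi S"
  shows "(\<lambda>k. uq S k $ r) \<longlonglongrightarrow> uq_inf S $ r"
proof -
  define j where "j = r div nxi S"
  define a where "a = r mod nxi S"
  have j: "j < nz S" and a: "a < nxi S" and rja: "r = j * nxi S + a"
    using idx_decomp[OF r] unfolding j_def a_def by auto
  have "(\<lambda>k. \<Sum>i<nz S. zP S i j * pk S k i * Gvec S i $ a) \<longlonglongrightarrow> (\<Sum>i<nz S. zP S i j * pinf S i * Gvec S i $ a)"
    using pkt by (intro tendsto_sum tendsto_mult tendsto_const) auto
  then show ?thesis unfolding rja uq_def uq_inf_def block_vec_idx[OF j a] using a by simp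
qed

lemma uQ_tendsto:
  assumes pkt: "\<And>i. i < nz S \<Longrightarrow> (\<lambda>k. pk S k i) \<longlonglongrightarrow> pinf S i" and r: "r < nz S * (nxi S)\<^sup>2"
  shows "(\<lambda>k. uQ S k $ r) \<longlonglongrightarrow> uQ_inf S $ r"
proof -
  define j where "j = r div (nxi S)\<^sup>2"
  define a where "a = r mod (nxi S)\<^sup>2"
  have j: "j < nz S" and a: "a < (nxi S)\<^sup>2" and rja: "r = j * (nxi S)\<^sup>2 + a"
    using idx_decomp[OF r] unfolding j_def a_def by auto
  have "(\<lambda>k. \<Sum>i<nz S. zP S i j * pk S k i * kron (col_mat (Gvec S i)) (col_mat (Gvec S i)) $$ (a, 0)) \<longlonglongrightarrow>
        (\<Sum>i<nz S. zP S i j * pinf S i * kron (col_mat (Gvec S i)) (col_mat (Gvec S i)) $$ (a, 0))"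
    using pkt by (intro tendsto_sum tendsto_mult tendsto_const) auto
  then show ?thesis unfolding rja uQ_def uQ_inf_def block_vec_idx[OF j a] using a by simp
qed

theorem mainTheorem2:
  fixes S :: td_sys
  assumes N_pos: "0 < nst S"
    and P_stoch: "stochastic_matrix (nst S) (P S)"
    and mu0_prob: "prob_vector (nst S) (mu0 S)"
    and irred: "irreducible_chain (nst S) (P S)"
    and aper: "aperiodic_chain (nst S) (P S)"
    and feat: "lin_indep_features (nst S) (p S) (phi S)"
    and gam: "0 < gam S" "gam S < 1"
    and M_pos: "0 < M S"
    and W_ds: "doubly_stochastic01 (M S) (W S)"
    and W_conn: "connected_pattern (M S) (W S)"
    and alpha_pos: "0 < alpha S"
    and rho: "spectral_radius (map_mat complex_of_real (H22 S)) < 1"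
  shows "invertible_mat (1\<^sub>m (nz S * nxi S) - H11 S)
       \<and> invertible_mat (1\<^sub>m (nz S * (nxi S)\<^sup>2) - H22 S)
       \<and> vec_tendsto (qv S) (q_inf S)
       \<and> vec_tendsto (Qv S) (Q_inf S)
       \<and> (delta S \<longlongrightarrow> delta_inf S) sequentially"
proof -
  have Wrow: "\<And>m. m < M S \<Longrightarrow> (\<Sum>m'<M S. W S m m') = 1"
    using W_ds unfolding doubly_stochastic01_def by auto
  have p0: "0 < p S"
  proof (rule ccontr)
    assume "\<not> 0 < p S"
    then have "p S = 0" by simp
    then have "\<forall>s<nst S. (1::real) = 0" using feat[unfolded lin_indep_features_def, rule_format, of "\<lambda>_. 1"] by auto
    then show False using N_pos by auto
  qed
  have nxi0: "0 < nxi S" unfolding nxi_def using p0 M_pos by simp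
  have nz0: "0 < nz S" unfolding nz_def using N_pos by simp
  have n22: "0 < nz S * (nxi S)\<^sup>2" using nxi0 nz0 by simp
  have null2: "pow_null (H22 S) (nz S * (nxi S)\<^sup>2)"
    by (rule specrad_pow_null[OF H22_carrier n22 rho])
  have null1: "pow_null (H11 S) (nz S * nxi S)"
    unfolding H11_def
  proof (rule H11_null[where Hf = "Hmat S" and pp = "zP S"])
    show "\<And>i. i < nz S \<Longrightarrow> Hmat S i \<in> carrier_mat (nxi S) (nxi S)" by (rule Hmat_carrier)
    show "\<And>i j. i < nz S \<Longrightarrow> j < nz S \<Longrightarrow> 0 \<le> zP S i j" by (rule zP_nonneg[OF P_stoch N_pos])
    show "\<And>i. i < nz S \<Longrightarrow> (\<Sum>j<nz S. zP S i j) = 1" by (rule zP_rowsum[OF P_stoch N_pos])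
    show "pow_null (block_mat (nz S) (nxi S * nxi S) (nxi S * nxi S) (\<lambda>j i. zP S i j \<cdot>\<^sub>m kron (Hmat S i) (Hmat S i))) (nz S * (nxi S * nxi S))"
      using null2 unfolding H22_def power2_eq_square .
  qed
  note I1 = inv_I_minus[OF H11_carrier null1]
  note I2 = inv_I_minus[OF H22_carrier null2]
  have pkt: "\<And>i. i < nz S \<Longrightarrow> (\<lambda>k. pk S k i) \<longlonglongrightarrow> pinf S i"
    by (rule pk_tendsto[OF N_pos P_stoch irred aper])
  have uqc: "uq S k \<in> carrier_vec (nz S * nxi S)" for k unfolding uq_def by (rule block_vec_carrier)
  have uqic: "uq_inf S \<in> carrier_vec (nz S * nxi S)" unfolding uq_inf_def by (rule block_vec_carrier)
  have qconv: "vec_tendsto (qv S) (q_inf S)"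
    unfolding q_inf_def
    by (rule affine_conv[OF H11_carrier null1 qv_carrier uqc qv_rec[OF N_pos Wrow] uqic uq_tendsto[OF pkt]])
  have qic: "q_inf S \<in> carrier_vec (nz S * nxi S)"
    unfolding q_inf_def using I1 uqic by auto
  have uQc: "uQ S k \<in> carrier_vec (nz S * (nxi S)\<^sup>2)" for k unfolding uQ_def by (rule block_vec_carrier)
  have uQic: "uQ_inf S \<in> carrier_vec (nz S * (nxi S)\<^sup>2)" unfolding uQ_inf_def by (rule block_vec_carrier)
  have Qconv: "vec_tendsto (Qv S) (Q_inf S)"
    unfolding Q_inf_def
  proof (rule affine_conv[where x = "Qv S" and u = "\<lambda>k. H21 S *\<^sub>v qv S k + uQ S k", OF H22_carrier null2 Qv_carrier _ Qv_rec[OF N_pos Wrow]])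
    show "\<And>k. H21 S *\<^sub>v qv S k + uQ S k \<in> carrier_vec (nz S * (nxi S)\<^sup>2)"
      using H21_carrier[of S] qv_carrier uQc by simp
    show "H21 S *\<^sub>v q_inf S + uQ_inf S \<in> carrier_vec (nz S * (nxi S)\<^sup>2)"
      using H21_carrier[of S] qic uQic by simp
    fix r assume r: "r < nz S * (nxi S)\<^sup>2"
    have "(\<lambda>k. (H21 S *\<^sub>v qv S k) $ r + uQ S k $ r) \<longlonglongrightarrow> (H21 S *\<^sub>v q_inf S) $ r + uQ_inf S $ r"
      by (intro tendsto_add mat_vec_tendsto[OF H21_carrier qconv qic r] uQ_tendsto[OF pkt r])
    moreover have "(H21 S *\<^sub>v qv S k + uQ S k) $ r = (H21 S *\<^sub>v qv S k) $ r + uQ S k $ r" for k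
      using r uQc[of k] by simp
    moreover have "(H21 S *\<^sub>v q_inf S + uQ_inf S) $ r = (H21 S *\<^sub>v q_inf S) $ r + uQ_inf S $ r"
      using r uQic by simp
    ultimately show "(\<lambda>k. (H21 S *\<^sub>v qv S k + uQ S k) $ r) \<longlonglongrightarrow> (H21 S *\<^sub>v q_inf S + uQ_inf S) $ r"
      by simp
  qed
  have Qic: "Q_inf S \<in> carrier_vec (nz S * (nxi S)\<^sup>2)"
    unfolding Q_inf_def using I2 H21_carrier[of S] qic uQic by auto
  have "(\<lambda>k. (Cdelta S *\<^sub>v Qv S k) $ 0) \<longlonglongrightarrow> (Cdelta S *\<^sub>v Q_inf S) $ 0"
    by (rule mat_vec_tendsto[OF Cdelta_carrier Qconv Qic]) simp
  moreover have "delta S = (\<lambda>k. (Cdelta S *\<^sub>v Qv S k) $ 0)"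
    by (rule ext) (rule delta_eq[OF N_pos P_stoch])
  ultimately have dconv: "delta S \<longlonglongrightarrow> delta_inf S"
    unfolding delta_inf_def Q_inf_def[symmetric] by simp
  show ?thesis using I1 I2 qconv Qconv dconv by blast
qed

end
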